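(* If $M$ is a compact piecewise linear $2$-manifold in $\mathbb{R}^3$, then there exists $N\in\mathbb{N}$ such that $\mathrm{Lip}((M,d_K),\mathbb{R}^N)<\infty$.
   Context: The Korányi metric on $\mathbb{R}^3$ is $d_K(p,q)=\big(((x-x')^2+(y-y')^2)^2+16(z-z'+\tfrac12(xy'-x'y))^2\big)^{1/4}$ for $p=(x,y,z)$, $q=(x',y',z')$. A map $f:(X,d_X)\to(Y,d_Y)$ is $L$-bi-Lipschitz if $L^{-1}d_X(a,b)\le d_Y(f(a),f(b))\le L d_X(a,b)$ for all $a,b$; $\mathrm{Lip}(X,Y)$ is the infimum of such $L$ over all maps $X\to Y$ ($\infty$ if no bi-Lipschitz map exists). $\mathbb{R}^N$ carries the Euclidean metric. *)

theory Defs
  imports "HOL-Analysis.Analysis"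
begin

definition koranyi :: "real^3 \<Rightarrow> real^3 \<Rightarrow> real" where
  "koranyi p q = root 4 (((p$1 - q$1)^2 + (p$2 - q$2)^2)^2
      + 16 * (p$3 - q$3 + (1/2) * (p$1 * q$2 - q$1 * p$2))^2)"

text \<open>Euclidean distance on R^N, points of R^N represented by their first N coordinates.\<close>
definition eucl_dist :: "nat \<Rightarrow> (nat \<Rightarrow> real) \<Rightarrow> (nat \<Rightarrow> real) \<Rightarrow> real" where
  "eucl_dist N u v = sqrt (\<Sum>i<N. (u i - v i)^2)"

definition bi_lipschitz_on ::
  "real \<Rightarrow> 'a set \<Rightarrow> ('a \<Rightarrow> 'a \<Rightarrow> real) \<Rightarrow> ('b \<Rightarrow> 'b \<Rightarrow> real) \<Rightarrow> ('a \<Rightarrow> 'b) \<Rightarrow> bool" where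
  "bi_lipschitz_on L S dX dY f \<longleftrightarrow> 0 < L \<and>
     (\<forall>a\<in>S. \<forall>b\<in>S. dX a b / L \<le> dY (f a) (f b) \<and> dY (f a) (f b) \<le> L * dX a b)"

definition topological_2_manifold :: "(real^3) set \<Rightarrow> bool" where
  "topological_2_manifold M \<longleftrightarrow>
     (\<forall>x\<in>M. \<exists>U. openin (top_of_set M) U \<and> x \<in> U \<and>
        (\<exists>V :: (real^2) set. open V \<and> U homeomorphic V))"

definition pl_2_manifold :: "(real^3) set \<Rightarrow> bool" where
  "pl_2_manifold M \<longleftrightarrow> topological_2_manifold M \<and>
     (\<exists>\<T>. triangulation \<T> \<and> \<Union>\<T> = M)"

end

theory Submission
  imports Defs
begin

definition kH :: "real^3 \<Rightarrow> real^3 \<Rightarrow> real" where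
  "kH p q = (p$1 - q$1)^2 + (p$2 - q$2)^2"
definition kV :: "real^3 \<Rightarrow> real^3 \<Rightarrow> real" where
  "kV p q = p$3 - q$3 + (1/2) * (p$1 * q$2 - q$1 * p$2)"
definition kZ :: "real^3 \<Rightarrow> real^3 \<Rightarrow> complex" where
  "kZ p q = Complex (kH p q) (4 * kV p q)"

lemma root4_sqrt: "root 4 x = sqrt (sqrt x)"
  by (metis num_double numeral_times_numeral real_root_mult_exp sqrt_def)

lemma kor_kZ: "koranyi p q = sqrt (cmod (kZ p q))"
proof -
  have "koranyi p q = root 4 ((kH p q)^2 + (4 * kV p q)^2)"
    by (simp add: koranyi_def kH_def kV_def power2_eq_square algebra_simps)
  then show ?thesis by (simp add: root4_sqrt kZ_def cmod_def)
qed

lemma kor_nonneg: "koranyi p q \<ge> 0" by (simp add: kor_kZ)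

lemma kor_sym: "koranyi p q = koranyi q p"
  unfolding koranyi_def by (simp add: algebra_simps power2_commute)

lemma kor_refl: "koranyi p p = 0" by (simp add: koranyi_def)

lemma kH_nonneg: "kH p q \<ge> 0" by (simp add: kH_def)

lemma kZ_split: "kZ p r = kZ p q + kZ q r + 2 * Complex
   ((p$1-q$1)*(q$1-r$1) + (p$2-q$2)*(q$2-r$2)) ((p$2-q$2)*(q$1-r$1) - (p$1-q$1)*(q$2-r$2))"
  by (simp add: complex_eq_iff kZ_def kH_def kV_def algebra_simps power2_eq_square)

lemma kor_triangle: "koranyi p r \<le> koranyi p q + koranyi q r"
proof -
  define ax where "ax = p$1-q$1"
  define ay where "ay = p$2-q$2"
  define bx where "bx = q$1-r$1"
  define by' where "by' = q$2-r$2"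
  define W where "W = Complex (ax*bx + ay*by') (ay*bx - ax*by')"
  have Z: "kZ p r = kZ p q + kZ q r + 2 * W" using kZ_split[of p r q] by (simp add: W_def ax_def ay_def bx_def by'_def)
  have "(cmod W)^2 = (ax*bx+ay*by')^2 + (ay*bx - ax*by')^2"
    unfolding W_def cmod_def by simp
  also have "\<dots> = (ax^2+ay^2)*(bx^2+by'^2)" by (simp add: power2_eq_square algebra_simps)
  finally have "(cmod W)^2 = (ax^2+ay^2)*(bx^2+by'^2)" .
  hence cW: "cmod W = sqrt (ax^2+ay^2) * sqrt (bx^2+by'^2)"
    by (metis norm_ge_zero real_sqrt_mult real_sqrt_unique)
  have h1: "ax^2+ay^2 \<le> cmod (kZ p q)"
    using abs_Re_le_cmod[of "kZ p q"] by (simp add: kZ_def kH_def ax_def ay_def)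
  have h2: "bx^2+by'^2 \<le> cmod (kZ q r)"
    using abs_Re_le_cmod[of "kZ q r"] by (simp add: kZ_def kH_def bx_def by'_def)
  have "cmod W \<le> sqrt (cmod (kZ p q)) * sqrt (cmod (kZ q r))"
    unfolding cW by (intro mult_mono real_sqrt_le_mono h1 h2) auto
  have n1: "cmod (kZ p q + kZ q r + 2 * W) \<le> cmod (kZ p q + kZ q r) + cmod (2 * W)"
    by (rule norm_triangle_ineq)
  have n2: "cmod (kZ p q + kZ q r) \<le> cmod (kZ p q) + cmod (kZ q r)" by (rule norm_triangle_ineq)
  have n3: "cmod (2 * W) = 2 * cmod W" by (simp add: norm_mult)
  have "cmod (kZ p r) \<le> cmod (kZ p q) + cmod (kZ q r) + 2 * cmod W"
    unfolding Z using n1 n2 n3 by linarith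
  also have "\<dots> \<le> (sqrt (cmod (kZ p q)) + sqrt (cmod (kZ q r)))^2"
    using \<open>cmod W \<le> _\<close> by (simp add: power2_sum)
  finally show ?thesis unfolding kor_kZ
    by (metis add_nonneg_nonneg real_sqrt_ge_zero real_le_lsqrt norm_ge_zero)
qed

lemma root4_bounds:
  assumes "a \<ge> 0" "b \<ge> 0"
  shows "(a + b)/2 \<le> root 4 (a^4 + b^4)" "root 4 (a^4 + b^4) \<le> a + b"
proof -
  have "a^4 + b^4 \<le> (a+b)^4" using assms
    by (simp add: power4_eq_xxxx algebra_simps add_nonneg_nonneg mult_nonneg_nonneg)
  then show "root 4 (a^4 + b^4) \<le> a + b"
    using assms by (metis add_nonneg_nonneg real_root_le_iff real_root_power_cancel zero_less_numeral)
  have "((a+b)/2)^4 \<le> a^4 + b^4"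
  proof (cases "a \<le> b")
    case True
    hence "(a+b)/2 \<le> b" by simp
    hence "((a+b)/2)^4 \<le> b^4" using assms by (intro power_mono) auto
    then show ?thesis using assms by (smt (verit) zero_le_power)
  next
    case False
    hence "(a+b)/2 \<le> a" by simp
    hence "((a+b)/2)^4 \<le> a^4" using assms by (intro power_mono) auto
    then show ?thesis using assms by (smt (verit) zero_le_power)
  qed
  then show "(a + b)/2 \<le> root 4 (a^4 + b^4)"
    using assms by (metis add_nonneg_nonneg divide_nonneg_pos real_root_le_iff real_root_power_cancel zero_less_numeral zero_less_two)
qed

lemma kor_eq: "koranyi p q = root 4 ((sqrt (kH p q))^4 + (2 * sqrt \<bar>kV p q\<bar>)^4)"
proof -
  have a: "(sqrt (kH p q))^4 = (kH p q)^2" using kH_nonneg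
    by (metis power2_eq_square power4_eq_xxxx real_sqrt_pow2 real_sqrt_ge_zero mult.assoc)
  have b: "(2 * sqrt \<bar>kV p q\<bar>)^4 = 16 * (kV p q)^2"
    by (simp add: power_mult_distrib power4_eq_xxxx) (metis abs_mult_self_eq mult.assoc power2_eq_square)
  show ?thesis unfolding a b by (simp add: koranyi_def kH_def kV_def)
qed

lemma kor_upper: "koranyi p q \<le> sqrt (kH p q) + 2 * sqrt \<bar>kV p q\<bar>"
  unfolding kor_eq by (rule root4_bounds) (auto simp: kH_nonneg)
lemma kor_lower: "(sqrt (kH p q) + 2 * sqrt \<bar>kV p q\<bar>)/2 \<le> koranyi p q"
  unfolding kor_eq by (rule root4_bounds) (auto simp: kH_nonneg)

definition emb :: "('a \<Rightarrow> 'a \<Rightarrow> real) \<Rightarrow> 'a set \<Rightarrow> bool" where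
  "emb d X \<longleftrightarrow> (\<exists>N f L. bi_lipschitz_on L X d (eucl_dist N) f)"

lemma eucl_L2: "eucl_dist N u v = L2_set (\<lambda>i. u i - v i) {..<N}"
  by (simp add: eucl_dist_def L2_set_def)

lemma eucl_nonneg: "eucl_dist N u v \<ge> 0" by (simp add: eucl_dist_def sum_nonneg)

lemma eucl_sym: "eucl_dist N u v = eucl_dist N v u"
  by (simp add: eucl_dist_def power2_commute)

lemma eucl_tri: "eucl_dist N u w \<le> eucl_dist N u v + eucl_dist N v w"
  unfolding eucl_L2 using L2_set_triangle_ineq[of "\<lambda>i. u i - v i" "\<lambda>i. v i - w i" "{..<N}"]
  by simp

lemma eucl_coord: "i < N \<Longrightarrow> \<bar>u i - v i\<bar> \<le> eucl_dist N u v"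
  unfolding eucl_dist_def
  by (rule real_le_rsqrt) (auto intro: member_le_sum[where f="\<lambda>i. (u i - v i)^2"])

lemma eucl_coord_bound:
  assumes "\<And>i. i < N \<Longrightarrow> \<bar>u i - v i\<bar> \<le> B" "B \<ge> 0"
  shows "eucl_dist N u v \<le> sqrt (real N) * B"
proof -
  have "(\<Sum>i<N. (u i - v i)^2) \<le> (\<Sum>i<N. B^2)"
    by (intro sum_mono) (metis abs_ge_zero assms(1) lessThan_iff power_mono power2_abs)
  then have "(\<Sum>i<N. (u i - v i)^2) \<le> real N * B^2" by simp
  then have "sqrt (\<Sum>i<N. (u i - v i)^2) \<le> sqrt (real N * B^2)" by (rule real_sqrt_le_mono)
  also have "\<dots> = sqrt (real N) * B" using assms(2) by (simp add: real_sqrt_mult)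
  finally show ?thesis unfolding eucl_dist_def .
qed

definition app :: "nat \<Rightarrow> (nat \<Rightarrow> real) \<Rightarrow> (nat \<Rightarrow> real) \<Rightarrow> nat \<Rightarrow> real" where
  "app n u v i = (if i < n then u i else v (i - n))"

lemma sum_split_add: "(\<Sum>i<n + m. f i) = (\<Sum>i<n. f i) + (\<Sum>i<m. f (n + i)) " for f :: "nat \<Rightarrow> real"
  by (induction m) auto

lemma eucl_app: "eucl_dist (n + m) (app n u v) (app n u' v') =
    sqrt ((eucl_dist n u u')^2 + (eucl_dist m v v')^2)"
proof -
  have "(\<Sum>i<n + m. (app n u v i - app n u' v' i)^2) =
        (\<Sum>i<n. (u i - u' i)^2) + (\<Sum>i<m. (v i - v' i)^2)"
    unfolding sum_split_add by (simp add: app_def)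
  then show ?thesis unfolding eucl_dist_def by (simp add: sum_nonneg)
qed

lemma eucl_one: "eucl_dist 1 (\<lambda>_. a) (\<lambda>_. b) = \<bar>a - b\<bar>"
  by (simp add: eucl_dist_def)

lemma sqrt_sum_sq_bounds:
  assumes "a \<ge> 0" "b \<ge> 0"
  shows "a \<le> sqrt (a^2 + b^2)" "b \<le> sqrt (a^2 + b^2)" "sqrt (a^2 + b^2) \<le> a + b"
    "(a + b) / 2 \<le> sqrt (a^2 + b^2)"
proof -
  show "a \<le> sqrt (a^2 + b^2)" by (simp add: real_le_rsqrt)
  show "b \<le> sqrt (a^2 + b^2)" by (simp add: real_le_rsqrt)
  show "sqrt (a^2 + b^2) \<le> a + b" using assms
    by (simp add: real_sqrt_le_iff' power2_sum)
  show "(a + b) / 2 \<le> sqrt (a^2 + b^2)"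
  proof -
    have "a \<le> sqrt (a^2 + b^2)" "b \<le> sqrt (a^2 + b^2)" by (simp_all add: real_le_rsqrt)
    then show ?thesis by argo
  qed
qed

lemma embI:
  assumes "0 < c"
    and "\<And>a b. a \<in> X \<Longrightarrow> b \<in> X \<Longrightarrow> c * d a b \<le> eucl_dist N (f a) (f b)"
    and "\<And>a b. a \<in> X \<Longrightarrow> b \<in> X \<Longrightarrow> eucl_dist N (f a) (f b) \<le> C * d a b"
    and "\<And>a b. a \<in> X \<Longrightarrow> b \<in> X \<Longrightarrow> 0 \<le> d a b"
  shows "emb d X"
proof -
  define L where "L = max (max C 1) (1/c)"
  have L0: "L > 0" "L \<ge> C" "L \<ge> 1/c" unfolding L_def by auto
  have "1 \<le> L * c" using L0(3) assms(1) by (simp add: divide_le_eq)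
  then have cL: "1 / L \<le> c" using L0(1) by (simp add: divide_le_eq mult.commute)
  have "bi_lipschitz_on L X d (eucl_dist N) f"
    unfolding bi_lipschitz_on_def
  proof (intro conjI ballI)
    fix a b assume ab: "a \<in> X" "b \<in> X"
    have "d a b / L = (1/L) * d a b" by simp
    also have "\<dots> \<le> c * d a b" using cL assms(4)[OF ab] by (intro mult_right_mono) auto
    finally show "d a b / L \<le> eucl_dist N (f a) (f b)" using assms(2)[OF ab] by linarith
    have "C * d a b \<le> L * d a b" using L0 assms(4)[OF ab] by (intro mult_right_mono) auto
    then show "eucl_dist N (f a) (f b) \<le> L * d a b" using assms(3)[OF ab] by linarith
  qed (use L0 in auto)
  then show ?thesis unfolding emb_def by blast
qed

lemma embE:
  assumes "emb d X"
  obtains N f c C where "0 < c" "0 < C"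
    "\<And>a b. a \<in> X \<Longrightarrow> b \<in> X \<Longrightarrow> c * d a b \<le> eucl_dist N (f a) (f b)"
    "\<And>a b. a \<in> X \<Longrightarrow> b \<in> X \<Longrightarrow> eucl_dist N (f a) (f b) \<le> C * d a b"
proof -
  obtain N f L where bl: "bi_lipschitz_on L X d (eucl_dist N) f" using assms emb_def by blast
  then have L: "L > 0" by (simp add: bi_lipschitz_on_def)
  show thesis
  proof (rule that[of "1/L" L N f])
    fix a b assume "a \<in> X" "b \<in> X"
    then show "1 / L * d a b \<le> eucl_dist N (f a) (f b)" "eucl_dist N (f a) (f b) \<le> L * d a b"
      using bl by (auto simp: bi_lipschitz_on_def)
  qed (use L in auto)
qed

lemma emb_transfer:
  assumes "emb e Y" "phi ` X \<subseteq> Y" "0 < c"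
    and "\<And>a b. a \<in> X \<Longrightarrow> b \<in> X \<Longrightarrow> c * d a b \<le> e (phi a) (phi b)"
    and "\<And>a b. a \<in> X \<Longrightarrow> b \<in> X \<Longrightarrow> e (phi a) (phi b) \<le> C * d a b"
    and "\<And>a b. a \<in> X \<Longrightarrow> b \<in> X \<Longrightarrow> 0 \<le> d a b"
  shows "emb d X"
proof -
  obtain N f c1 C1 where c1: "0 < c1" "0 < C1"
    and lo: "\<And>a b. a \<in> Y \<Longrightarrow> b \<in> Y \<Longrightarrow> c1 * e a b \<le> eucl_dist N (f a) (f b)"
    and up: "\<And>a b. a \<in> Y \<Longrightarrow> b \<in> Y \<Longrightarrow> eucl_dist N (f a) (f b) \<le> C1 * e a b"
    using embE[OF assms(1)] by metis
  show ?thesis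
  proof (rule embI[where c="c1 * c" and C="C1 * C" and f="f \<circ> phi" and N=N])
    fix a b assume ab: "a \<in> X" "b \<in> X"
    then have Y: "phi a \<in> Y" "phi b \<in> Y" using assms(2) by auto
    have "c1 * c * d a b \<le> c1 * e (phi a) (phi b)"
      using assms(4)[OF ab] c1 by (simp add: mult.assoc)
    then show "c1 * c * d a b \<le> eucl_dist N ((f \<circ> phi) a) ((f \<circ> phi) b)"
      using lo[OF Y] by simp
    have "C1 * e (phi a) (phi b) \<le> C1 * C * d a b"
      using assms(5)[OF ab] c1 by (simp add: mult.assoc)
    then show "eucl_dist N ((f \<circ> phi) a) ((f \<circ> phi) b) \<le> C1 * C * d a b"
      using up[OF Y] by simp
  qed (use assms c1 in auto)
qed

lemma emb_subset: "emb d Y \<Longrightarrow> X \<subseteq> Y \<Longrightarrow> emb d X"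
  unfolding emb_def bi_lipschitz_on_def by blast

lemma emb_empty: "emb d {}"
  unfolding emb_def bi_lipschitz_on_def by (rule exI[of _ 0], rule exI, rule exI[of _ 1]) simp

section \<open>McShane extension\<close>

definition mcs :: "('a \<Rightarrow> 'a \<Rightarrow> real) \<Rightarrow> real \<Rightarrow> ('a \<Rightarrow> real) \<Rightarrow> 'a set \<Rightarrow> 'a \<Rightarrow> real" where
  "mcs d L g A p = Inf ((\<lambda>a. g a + L * d p a) ` A)"

locale pmetric =
  fixes d :: "'a \<Rightarrow> 'a \<Rightarrow> real"
  assumes sym: "d x y = d y x" and tri: "d x z \<le> d x y + d y z"
    and nn: "0 \<le> d x y" and refl: "d x x = 0"
begin

lemma mcs_props:
  assumes A: "A \<noteq> {}" and L: "L \<ge> 0"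
    and lip: "\<And>a b. a \<in> A \<Longrightarrow> b \<in> A \<Longrightarrow> g a \<le> g b + L * d a b"
  shows "\<And>a. a \<in> A \<Longrightarrow> mcs d L g A a = g a"
    and "\<And>p q. mcs d L g A p \<le> mcs d L g A q + L * d p q"
    and "\<And>p q. \<bar>mcs d L g A p - mcs d L g A q\<bar> \<le> L * d p q"
proof -
  obtain a0 where a0: "a0 \<in> A" using A by blast
  have bdd: "bdd_below ((\<lambda>a. g a + L * d p a) ` A)" for p
  proof (rule bdd_belowI2)
    fix a assume a: "a \<in> A"
    have "g a0 \<le> g a + L * d a0 a" using lip[OF a0 a] .
    moreover have "L * d a0 a \<le> L * d a0 p + L * d p a"
      using tri[of a0 a p] L by (metis distrib_left mult_left_mono)
    ultimately show "g a0 - L * d a0 p \<le> g a + L * d p a" by linarith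
  qed
  show 1: "mcs d L g A a = g a" if a: "a \<in> A" for a
  proof (rule antisym)
    show "mcs d L g A a \<le> g a"
      unfolding mcs_def using cInf_lower[OF imageI[OF a] bdd[of a]] by (simp add: refl)
    show "g a \<le> mcs d L g A a"
      unfolding mcs_def using A by (auto intro!: cInf_greatest lip[OF a])
  qed
  show 2: "mcs d L g A p \<le> mcs d L g A q + L * d p q" for p q
  proof -
    have "mcs d L g A p - L * d p q \<le> mcs d L g A q"
      unfolding mcs_def
    proof (rule cInf_greatest)
      show "(\<lambda>a. g a + L * d q a) ` A \<noteq> {}" using A by blast
      fix x assume "x \<in> (\<lambda>a. g a + L * d q a) ` A"
      then obtain a where a: "a \<in> A" and x: "x = g a + L * d q a" by blast
      have "Inf ((\<lambda>a. g a + L * d p a) ` A) \<le> g a + L * d p a"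
        using cInf_lower[OF imageI[OF a] bdd[of p]] .
      moreover have "L * d p a \<le> L * d p q + L * d q a"
        using tri[of p a q] L by (metis distrib_left mult_left_mono)
      ultimately show "Inf ((\<lambda>a. g a + L * d p a) ` A) - L * d p q \<le> x" using x by linarith
    qed
    then show ?thesis by linarith
  qed
  show "\<bar>mcs d L g A p - mcs d L g A q\<bar> \<le> L * d p q" for p q
    using 2[of p q] 2[of q p] by (simp add: sym abs_le_iff)
qed

lemma mcs_dist_nonneg:
  assumes "A \<noteq> {}"
  shows "mcs d 1 (\<lambda>_. 0) A p \<ge> 0"
  unfolding mcs_def using assms by (auto intro!: cInf_greatest nn)

lemma mcs_dist_ge:
  assumes "A \<noteq> {}" "\<And>a. a \<in> A \<Longrightarrow> r \<le> d p a"
  shows "mcs d 1 (\<lambda>_. 0) A p \<ge> r"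
  unfolding mcs_def using assms by (auto intro!: cInf_greatest)

end

lemma eucl_cong: "(\<And>i. i < N \<Longrightarrow> u i = u' i \<and> v i = v' i) \<Longrightarrow> eucl_dist N u v = eucl_dist N u' v'"
  unfolding eucl_dist_def by (intro arg_cong[where f=sqrt] sum.cong) auto

context pmetric begin

lemma ext_vec:
  assumes A: "A \<noteq> {}" and C: "C > 0"
    and up: "\<And>a b. a \<in> A \<Longrightarrow> b \<in> A \<Longrightarrow> eucl_dist N (f a) (f b) \<le> C * d a b"
  defines "F \<equiv> (\<lambda>p i. mcs d C (\<lambda>a. f a i) A p)"
  shows "\<And>a b. a \<in> A \<Longrightarrow> b \<in> A \<Longrightarrow> eucl_dist N (F a) (F b) = eucl_dist N (f a) (f b)"
    and "\<And>p q. eucl_dist N (F p) (F q) \<le> sqrt (real N) * C * d p q"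
proof -
  have lip: "f a i \<le> f b i + C * d a b" if "a \<in> A" "b \<in> A" "i < N" for a b i
    using eucl_coord[OF that(3), of "f a" "f b"] up[OF that(1,2)] by linarith
  have P: "\<And>a. a \<in> A \<Longrightarrow> F a i = f a i" "\<And>p q. \<bar>F p i - F q i\<bar> \<le> C * d p q" if "i < N" for i
    using mcs_props[OF A, of C "\<lambda>a. f a i"] lip that C unfolding F_def by auto
  show "eucl_dist N (F a) (F b) = eucl_dist N (f a) (f b)" if "a \<in> A" "b \<in> A" for a b
    by (rule eucl_cong) (use P that in auto)
  show "eucl_dist N (F p) (F q) \<le> sqrt (real N) * C * d p q" for p q
    using eucl_coord_bound[of N "F p" "F q" "C * d p q"] P C nn[of p q]
    by (simp add: mult.assoc)
qed

lemma emb_Un: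
  assumes eA: "emb d A" and eB: "emb d B"
  shows "emb d (A \<union> B)"
proof (cases "A = {} \<or> B = {}")
  case True
  then show ?thesis using assms by auto
next
  case False
  then have A: "A \<noteq> {}" and B: "B \<noteq> {}" by auto
  obtain N1 f c1 C1 where c1: "0 < c1" "0 < C1"
    and lo1: "\<And>a b. a \<in> A \<Longrightarrow> b \<in> A \<Longrightarrow> c1 * d a b \<le> eucl_dist N1 (f a) (f b)"
    and up1: "\<And>a b. a \<in> A \<Longrightarrow> b \<in> A \<Longrightarrow> eucl_dist N1 (f a) (f b) \<le> C1 * d a b"
    using embE[OF eA] by metis
  obtain N2 g c2 C2 where c2: "0 < c2" "0 < C2"
    and lo2: "\<And>a b. a \<in> B \<Longrightarrow> b \<in> B \<Longrightarrow> c2 * d a b \<le> eucl_dist N2 (g a) (g b)"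
    and up2: "\<And>a b. a \<in> B \<Longrightarrow> b \<in> B \<Longrightarrow> eucl_dist N2 (g a) (g b) \<le> C2 * d a b"
    using embE[OF eB] by metis
  define F where "F = (\<lambda>p i. mcs d C1 (\<lambda>a. f a i) A p)"
  define G where "G = (\<lambda>p i. mcs d C2 (\<lambda>a. g a i) B p)"
  have F: "\<And>a b. a \<in> A \<Longrightarrow> b \<in> A \<Longrightarrow> eucl_dist N1 (F a) (F b) = eucl_dist N1 (f a) (f b)"
    "\<And>p q. eucl_dist N1 (F p) (F q) \<le> sqrt (real N1) * C1 * d p q"
    using ext_vec[OF A c1(2) up1] unfolding F_def by auto
  have G: "\<And>a b. a \<in> B \<Longrightarrow> b \<in> B \<Longrightarrow> eucl_dist N2 (G a) (G b) = eucl_dist N2 (g a) (g b)"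
    "\<And>p q. eucl_dist N2 (G p) (G q) \<le> sqrt (real N2) * C2 * d p q"
    using ext_vec[OF B c2(2) up2] unfolding G_def by auto
  define DA where "DA = mcs d 1 (\<lambda>_. 0) A"
  define DB where "DB = mcs d 1 (\<lambda>_. 0) B"
  have lip0: "\<And>a b. (0::real) \<le> 0 + 1 * d a b" using nn by simp
  note DAp = mcs_props[OF A, of 1 "\<lambda>_. 0", OF _ lip0, folded DA_def, simplified]
  note DBp = mcs_props[OF B, of 1 "\<lambda>_. 0", OF _ lip0, folded DB_def, simplified]
  define psi where "psi = (\<lambda>p. DA p - DB p)"
  have psi_lip: "\<bar>psi p - psi q\<bar> \<le> 2 * d p q" for p q
    using DAp(3)[of p q] DBp(3)[of p q] unfolding psi_def by linarith
  define H where "H = (\<lambda>p. app N1 (F p) (app N2 (G p) (\<lambda>_. psi p)))"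
  define E where "E = (\<lambda>p q. eucl_dist (N1 + (N2 + 1)) (H p) (H q))"
  have E_eq: "E p q = sqrt ((eucl_dist N1 (F p) (F q))^2 +
       (sqrt ((eucl_dist N2 (G p) (G q))^2 + \<bar>psi p - psi q\<bar>^2))^2)" for p q
    unfolding E_def H_def eucl_app eucl_one ..
  have E1: "eucl_dist N1 (F p) (F q) \<le> E p q" and
       E2: "eucl_dist N2 (G p) (G q) \<le> E p q" and
       E3: "\<bar>psi p - psi q\<bar> \<le> E p q" and
       Eup: "E p q \<le> eucl_dist N1 (F p) (F q) + eucl_dist N2 (G p) (G q) + \<bar>psi p - psi q\<bar>" for p q
  proof -
    have s0: "0 \<le> sqrt ((eucl_dist N2 (G p) (G q))^2 + \<bar>psi p - psi q\<bar>^2)" by simp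
    note b1 = sqrt_sum_sq_bounds[OF eucl_nonneg[of N1 "F p" "F q"] s0]
    note b2 = sqrt_sum_sq_bounds[OF eucl_nonneg[of N2 "G p" "G q"] abs_ge_zero[of "psi p - psi q"]]
    show "eucl_dist N1 (F p) (F q) \<le> E p q" unfolding E_eq by (rule b1(1))
    show "eucl_dist N2 (G p) (G q) \<le> E p q" unfolding E_eq by (rule order_trans[OF b2(1) b1(2)])
    show "\<bar>psi p - psi q\<bar> \<le> E p q" unfolding E_eq by (rule order_trans[OF b2(2) b1(2)])
    show "E p q \<le> eucl_dist N1 (F p) (F q) + eucl_dist N2 (G p) (G q) + \<bar>psi p - psi q\<bar>"
      unfolding E_eq using order_trans[OF b1(3) add_left_mono[OF b2(3)]] by (simp add: add.assoc)
  qed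
  have E_sym: "E p q = E q p" for p q unfolding E_def by (rule eucl_sym)
  define K2 where "K2 = sqrt (real N2) * C2"
  have K2: "K2 \<ge> 0" unfolding K2_def using c2 by simp
  define eps where "eps = c2 / (2 * (c2 + K2))"
  have eps: "eps > 0" unfolding eps_def using c2 K2 by simp
  have pos: "c2 + K2 > 0" using c2 K2 by simp
  have eps2: "(c2 + K2) * eps = c2 / 2" unfolding eps_def using pos by (simp add: field_simps)
  define kap where "kap = min (c2/2) eps"
  have kap: "kap > 0" unfolding kap_def using c2 eps by simp
  have cross: "kap * d p q \<le> E p q" if p: "p \<in> A" and q: "q \<in> B" for p q
  proof (cases "\<exists>b'\<in>B. d p b' < eps * d p q")
    case True
    then obtain b' where b': "b' \<in> B" "d p b' < eps * d p q" by blast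
    have "eucl_dist N2 (G b') (G q) \<le> eucl_dist N2 (G b') (G p) + eucl_dist N2 (G p) (G q)"
      by (rule eucl_tri)
    moreover have "eucl_dist N2 (G b') (G p) \<le> K2 * d p b'"
      using G(2)[of b' p] by (simp add: K2_def sym)
    moreover have "eucl_dist N2 (G b') (G q) \<ge> c2 * d b' q"
      using G(1)[OF b'(1) q] lo2[OF b'(1) q] by simp
    moreover have "c2 * d p q \<le> c2 * d p b' + c2 * d b' q"
      using tri[of p q b'] c2 by (metis distrib_left mult_left_mono less_imp_le)
    moreover have "(c2 + K2) * d p b' = c2 * d p b' + K2 * d p b'" by (rule distrib_right)
    ultimately have "eucl_dist N2 (G p) (G q) \<ge> c2 * d p q - (c2 + K2) * d p b'"
      by linarith
    moreover have "(c2 + K2) * d p b' \<le> (c2 + K2) * (eps * d p q)"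
      using b'(2) c2 K2 by (intro mult_left_mono) auto
    moreover have "(c2 + K2) * (eps * d p q) = c2/2 * d p q" using eps2 by (metis mult.assoc)
    ultimately have "eucl_dist N2 (G p) (G q) \<ge> c2/2 * d p q"
      by linarith
    moreover have "kap * d p q \<le> c2/2 * d p q" unfolding kap_def using nn[of p q]
      by (intro mult_right_mono) auto
    ultimately show ?thesis using E2[of p q] by linarith
  next
    case False
    then have "DB p \<ge> eps * d p q" unfolding DB_def
      by (intro pmetric.mcs_dist_ge[OF pmetric_axioms B]) (auto simp: not_less)
    moreover have "DA p = 0" using DAp(1)[OF p] .
    moreover have "DB q = 0" using DBp(1)[OF q] .
    moreover have "DA q \<ge> 0" unfolding DA_def by (rule mcs_dist_nonneg[OF A])
    ultimately have "\<bar>psi p - psi q\<bar> \<ge> eps * d p q" unfolding psi_def by linarith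
    moreover have "kap * d p q \<le> eps * d p q" unfolding kap_def using nn[of p q]
      by (intro mult_right_mono) auto
    ultimately show ?thesis using E3[of p q] by linarith
  qed
  show ?thesis
  proof (rule embI[where c="min c1 kap" and C="sqrt (real N1) * C1 + sqrt (real N2) * C2 + 2"
        and f=H and N="N1 + (N2 + 1)"])
    show "0 < min c1 kap" using c1 kap by simp
    fix a b assume ab: "a \<in> A \<union> B" "b \<in> A \<union> B"
    show "0 \<le> d a b" by (rule nn)
    have "eucl_dist (N1 + (N2 + 1)) (H a) (H b) \<le> sqrt (real N1) * C1 * d a b + sqrt (real N2) * C2 * d a b + 2 * d a b"
      using Eup[of a b] F(2)[of a b] G(2)[of a b] psi_lip[of a b] unfolding E_def by linarith
    then show "eucl_dist (N1 + (N2 + 1)) (H a) (H b) \<le> (sqrt (real N1) * C1 + sqrt (real N2) * C2 + 2) * d a b"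
      by (simp add: algebra_simps)
    have m1: "min c1 kap * d a b \<le> c1 * d a b" "min c1 kap * d a b \<le> kap * d a b"
      using nn[of a b] by (auto intro: mult_right_mono)
    have m2: "min c1 kap * d a b \<le> c2 * d a b"
    proof -
      have "min c1 kap \<le> c2" unfolding kap_def using c2 by simp
      then show ?thesis using nn[of a b] by (rule mult_right_mono)
    qed
    have "min c1 kap * d a b \<le> E a b"
    proof -
      { assume "a \<in> A" "b \<in> A"
        then have ?thesis using lo1[of a b] F(1)[of a b] E1[of a b] m1 by linarith }
      moreover
      { assume "a \<in> B" "b \<in> B"
        then have ?thesis using lo2[of a b] G(1)[of a b] E2[of a b] m2 by linarith }
      moreover
      { assume "a \<in> A" "b \<in> B"
        then have ?thesis using cross[of a b] m1 by linarith }
      moreover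
      { assume h: "a \<in> B" "b \<in> A"
        have "kap * d a b \<le> E a b" using cross[OF h(2) h(1)] unfolding E_sym[of b a] sym[of b a] .
        then have ?thesis using m1(2) by linarith }
      ultimately show ?thesis using ab by blast
    qed
    then show "min c1 kap * d a b \<le> eucl_dist (N1 + (N2 + 1)) (H a) (H b)" unfolding E_def .
  qed
qed

lemma emb_Union:
  assumes "finite \<T>" "\<And>T. T \<in> \<T> \<Longrightarrow> emb d T"
  shows "emb d (\<Union>\<T>)"
  using assms
proof (induction rule: finite_induct)
  case empty
  then show ?case using emb_empty by simp
next
  case (insert x F)
  then show ?case using emb_Un[of x "\<Union>F"] by simp
qed

end

definition eE :: "real \<Rightarrow> complex" where "eE a = exp (\<i> * complex_of_real a)"

lemma eE_norm: "cmod (eE a) = 1" by (simp add: eE_def)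

lemma eE_diff_sq: "(cmod (eE a - eE b))^2 = 2 - 2 * cos (a - b)"
  using cmod_diff_squared[of 1 a 1 b] by (simp add: eE_def)

lemma eE_diff_le: "cmod (eE a - eE b) \<le> \<bar>a - b\<bar>"
proof -
  have "a - b = 2 * ((a - b)/2)" by simp
  then have "cos (a - b) = cos (2 * ((a - b)/2))" by metis
  also have "\<dots> = 1 - 2 * (sin ((a - b)/2))^2" by (rule cos_double_sin)
  finally have "cos (a - b) = 1 - 2 * (sin ((a - b)/2))^2" .
  moreover have "\<bar>sin ((a - b)/2)\<bar>^2 \<le> \<bar>(a - b)/2\<bar>^2"
    by (rule power_mono[OF abs_sin_x_le_abs_x abs_ge_zero])
  then have "(sin ((a - b)/2))^2 \<le> ((a - b)/2)^2" by (simp only: power2_abs)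
  ultimately have "(cmod (eE a - eE b))^2 \<le> (a - b)^2"
    unfolding eE_diff_sq by (simp add: power_divide)
  then show ?thesis using power2_le_imp_le[of "cmod (eE a - eE b)" "\<bar>a - b\<bar>"] by simp
qed

lemma eE_diff_le2: "cmod (eE a - eE b) \<le> 2"
  using norm_triangle_ineq4[of "eE a" "eE b"] by (simp add: eE_norm)

lemma eE_diff_ge:
  assumes "pi/2 \<le> \<bar>a - b\<bar>" "\<bar>a - b\<bar> \<le> pi"
  shows "sqrt 2 \<le> cmod (eE a - eE b)"
proof -
  have "cos \<bar>a - b\<bar> \<le> 0"
  proof -
    have "0 \<le> cos (pi - \<bar>a - b\<bar>)" using assms by (intro cos_ge_zero) auto
    then show ?thesis by (simp add: cos_pi_minus)
  qed
  moreover have "cos \<bar>x\<bar> = cos x" for x :: real by (cases "x \<ge> 0") auto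
  ultimately have "cos (a - b) \<le> 0" by metis
  then have "2 \<le> (cmod (eE a - eE b))^2" unfolding eE_diff_sq by simp
  then show ?thesis by (simp add: real_le_lsqrt real_sqrt_le_iff)
qed

definition rho :: real where "rho = 1 / sqrt 2"
definition aj :: "nat \<Rightarrow> real \<Rightarrow> complex" where
  "aj j t = complex_of_real (rho ^ j) * eE (pi * 2^j * t)"

lemma rho_pos: "rho > 0" and rho_lt1: "rho < 1" unfolding rho_def by auto

lemma rho_sq: "rho^2 = 1/2" unfolding rho_def by (simp add: power_divide)

lemma rho_pow_sq: "(rho^j)^2 = 1 / 2^j"
proof -
  have "(rho^j)^2 = rho^(j*2)" by (rule power_mult[symmetric])
  also have "\<dots> = rho^(2*j)" by (simp add: mult.commute)
  also have "\<dots> = (rho^2)^j" by (rule power_mult)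
  finally show ?thesis by (simp add: rho_sq power_one_over)
qed
  
lemma rho_2pow: "rho^j * 2^j = sqrt 2 ^ j"
proof -
  have "rho * 2 = 2 / sqrt 2" by (simp add: rho_def)
  also have "\<dots> = sqrt 2" by (rule real_div_sqrt) simp
  finally have "rho * 2 = sqrt 2" .
  then show ?thesis by (simp flip: power_mult_distrib)
qed

lemma sqrt2_10: "sqrt 2 ^ 10 = (32::real)"
proof -
  have "sqrt 2 ^ 10 = sqrt 2 ^ (2 * 5)" by simp
  also have "\<dots> = (sqrt 2 ^ 2) ^ 5" by (rule power_mult)
  also have "\<dots> = 2 ^ 5" by simp
  also have "(2::real) ^ 5 = 32" by simp
  finally show ?thesis .
qed

lemma rho_10: "rho ^ 10 = 1/32" unfolding rho_def by (simp add: power_divide sqrt2_10)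

lemma aj_norm: "cmod (aj j t) = rho ^ j"
  using rho_pos by (simp add: aj_def norm_mult eE_norm norm_power)

lemma aj_diff_up1: "cmod (aj j s - aj j t) \<le> pi * sqrt 2 ^ j * \<bar>s - t\<bar>"
proof -
  have "aj j s - aj j t = complex_of_real (rho ^ j) * (eE (pi * 2^j * s) - eE (pi * 2^j * t))"
    by (simp add: aj_def algebra_simps)
  then have "cmod (aj j s - aj j t) = rho ^ j * cmod (eE (pi * 2^j * s) - eE (pi * 2^j * t))"
    using rho_pos by (simp add: norm_mult norm_power)
  also have "\<dots> \<le> rho ^ j * \<bar>pi * 2^j * s - pi * 2^j * t\<bar>"
    using rho_pos by (intro mult_left_mono eE_diff_le) auto
  also have "\<bar>pi * 2^j * s - pi * 2^j * t\<bar> = pi * 2^j * \<bar>s - t\<bar>"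
    by (simp add: abs_mult flip: right_diff_distrib)
  also have "rho ^ j * (pi * 2^j * \<bar>s - t\<bar>) = pi * (rho^j * 2^j) * \<bar>s - t\<bar>" by simp
  finally show ?thesis unfolding rho_2pow .
qed

lemma aj_diff_up2: "cmod (aj j s - aj j t) \<le> 2 * rho ^ j"
  using norm_triangle_ineq4[of "aj j s" "aj j t"] by (simp add: aj_norm)

lemma aj_diff_low:
  assumes "1/2 \<le> 2^j * \<bar>s - t\<bar>" "2^j * \<bar>s - t\<bar> \<le> 1"
  shows "sqrt 2 * rho ^ j \<le> cmod (aj j s - aj j t)"
proof -
  have "aj j s - aj j t = complex_of_real (rho ^ j) * (eE (pi * 2^j * s) - eE (pi * 2^j * t))"
    by (simp add: aj_def algebra_simps)
  then have eq: "cmod (aj j s - aj j t) = rho ^ j * cmod (eE (pi * 2^j * s) - eE (pi * 2^j * t))"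
    using rho_pos by (simp add: norm_mult norm_power)
  have ab: "\<bar>pi * 2^j * s - pi * 2^j * t\<bar> = pi * (2^j * \<bar>s - t\<bar>)"
    by (simp add: abs_mult flip: right_diff_distrib)
  have "pi * (1/2) \<le> pi * (2^j * \<bar>s - t\<bar>)"
    by (rule mult_left_mono[OF assms(1)]) (use pi_gt_zero in linarith)
  then have "pi/2 \<le> pi * (2^j * \<bar>s - t\<bar>)" by simp
  moreover have "pi * (2^j * \<bar>s - t\<bar>) \<le> pi * 1"
    by (rule mult_left_mono[OF assms(2)]) (use pi_gt_zero in linarith)
  ultimately have "sqrt 2 \<le> cmod (eE (pi * 2^j * s) - eE (pi * 2^j * t))"
    by (intro eE_diff_ge) (simp_all add: ab)
  then show ?thesis unfolding eq using rho_pos by (simp add: mult.commute)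
qed

lemma fin_geo: "0 \<le> (x::real) \<Longrightarrow> x < 1 \<Longrightarrow> (\<Sum>i<m. x^(m - i)) \<le> x / (1 - x)"
proof (induction m)
  case 0
  then show ?case by (simp add: zero_le_divide_iff)
next
  case (Suc m)
  have "(\<Sum>i<Suc m. x^(Suc m - i)) = (\<Sum>i<m. x^(Suc m - i)) + x" by simp
  also have "(\<Sum>i<m. x^(Suc m - i)) = (\<Sum>i<m. x * x^(m - i))"
    by (intro sum.cong refl) (simp add: Suc_diff_le)
  also have "\<dots> = x * (\<Sum>i<m. x^(m - i))" by (simp add: sum_distrib_left)
  also have "x * (\<Sum>i<m. x^(m - i)) + x \<le> x * (x / (1 - x)) + x"
    using mult_left_mono[OF Suc.IH[OF Suc.prems] Suc.prems(1)] by simp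
  also have "x * (x / (1 - x)) + x = x / (1 - x)" using Suc.prems by (simp add: field_simps)
  finally show ?case .
qed

lemma geo_split:
  fixes d :: "nat \<Rightarrow> complex"
  assumes sd: "summable d" and x: "0 \<le> x" "x < 1" and B: "B \<ge> 0"
    and lo: "\<And>m. m < m0 \<Longrightarrow> norm (d m) \<le> B * x^(m0 - m)"
    and hi: "\<And>n. norm (d (n + Suc m0)) \<le> B * x^(Suc n)"
  shows "norm (suminf d - d m0) \<le> 2 * (B * x / (1 - x))"
proof -
  have "suminf d = (\<Sum>n. d (n + Suc m0)) + (\<Sum>i<Suc m0. d i)"
    by (rule suminf_split_initial_segment[OF sd])
  then have eq: "suminf d - d m0 = (\<Sum>n. d (n + Suc m0)) + (\<Sum>i<m0. d i)" by simp
  have sg: "summable (\<lambda>n. B * x^(Suc n))"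
    using x by (intro summable_mult summable_geometric summable_ignore_initial_segment[where k=1, simplified]) auto
  have sg': "summable (\<lambda>n. x^n)" using x by (intro summable_geometric) auto
  have "(\<Sum>n. B * x^(Suc n)) = B * x * (\<Sum>n. x^n)"
    using suminf_mult[OF sg', of "B * x"] by (simp add: mult.assoc)
  also have "\<dots> = B * x / (1 - x)" using x by (simp add: suminf_geometric)
  finally have t1: "norm (\<Sum>n. d (n + Suc m0)) \<le> B * x / (1 - x)"
    using norm_suminf_le[OF hi sg] by simp
  have "norm (\<Sum>i<m0. d i) \<le> (\<Sum>i<m0. norm (d i))" by (rule norm_sum)
  also have "\<dots> \<le> (\<Sum>i<m0. B * x^(m0 - i))" by (intro sum_mono lo) simp
  also have "\<dots> = B * (\<Sum>i<m0. x^(m0 - i))" by (simp add: sum_distrib_left)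
  also have "\<dots> \<le> B * (x / (1 - x))" using fin_geo[OF x] B by (intro mult_left_mono) auto
  finally have t2: "norm (\<Sum>i<m0. d i) \<le> B * x / (1 - x)" by simp
  show ?thesis unfolding eq using norm_triangle_ineq[of "\<Sum>n. d (n + Suc m0)" "\<Sum>i<m0. d i"] t1 t2
    by linarith
qed

definition Phi :: "nat \<Rightarrow> real \<Rightarrow> complex" where
  "Phi r t = (\<Sum>m. aj (m * 10 + r) t)"

lemma summable_aj: "summable (\<lambda>m. aj (m * 10 + r) t)"
proof (rule summable_comparison_test)
  show "summable (\<lambda>m. rho ^ m)" using rho_pos rho_lt1 by (intro summable_geometric) auto
  show "\<exists>N. \<forall>n\<ge>N. norm (aj (n * 10 + r) t) \<le> rho ^ n"
    using rho_pos rho_lt1 by (auto simp: aj_norm intro!: power_decreasing)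
qed

lemma Phi_diff: "Phi r s - Phi r t = (\<Sum>m. aj (m * 10 + r) s - aj (m * 10 + r) t)"
  unfolding Phi_def by (simp add: suminf_diff summable_aj)

lemma summable_aj_diff: "summable (\<lambda>m. aj (m * 10 + r) s - aj (m * 10 + r) t)"
  by (rule summable_diff[OF summable_aj summable_aj])

lemma Phi_bound: "cmod (Phi r t) \<le> 4"
proof -
  have s: "summable (\<lambda>m. rho ^ m)" using rho_pos rho_lt1 by (intro summable_geometric) auto
  have "cmod (Phi r t) \<le> (\<Sum>m. rho ^ m)" unfolding Phi_def
    using rho_pos rho_lt1 by (intro norm_suminf_le s) (auto simp: aj_norm intro!: power_decreasing)
  also have "\<dots> = 1 / (1 - rho)" using rho_pos rho_lt1 by (simp add: suminf_geometric)
  also have "\<dots> \<le> 4"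
  proof -
    have "sqrt 2 \<ge> 4/3" by (rule real_le_rsqrt) (simp add: power2_eq_square)
    then have "rho \<le> 3/4" unfolding rho_def by (simp add: divide_le_eq)
    then show ?thesis using rho_lt1 by (simp add: divide_le_eq)
  qed
  finally show ?thesis .
qed

lemma exJ:
  assumes "0 < \<delta>" "\<delta> \<le> (1::real)"
  shows "\<exists>J::nat. 1/2 < 2^J * \<delta> \<and> 2^J * \<delta> \<le> 1"
proof -
  obtain n where "1/\<delta> < 2^n" using real_arch_pow[of 2 "1/\<delta>"] by auto
  then have "1 < 2^n * \<delta>" using assms by (simp add: divide_less_eq)
  then obtain J where J: "\<not> (1 < 2^J * \<delta>)" "1 < 2^(Suc J) * \<delta>"
    using exists_least_lemma[of "\<lambda>n. 1 < 2^n * \<delta>"] assms by auto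
  then show ?thesis by (intro exI[of _ J]) auto
qed

lemma w_pow_add: "sqrt 2 ^ (a + 10 * k) = sqrt 2 ^ a * 32 ^ k"
  by (simp add: power_add power_mult sqrt2_10)

lemma rho_pow_add: "rho ^ (a + 10 * k) = rho ^ a * (1/32) ^ k"
  by (simp add: power_add power_mult rho_10)

lemma key_wJ: "\<delta> \<ge> 0 \<Longrightarrow> 2^J * \<delta> \<le> 1 \<Longrightarrow> \<delta> * sqrt 2 ^ J \<le> rho ^ J"
proof -
  assume h: "\<delta> \<ge> 0" "2^J * \<delta> \<le> 1"
  have "\<delta> * sqrt 2 ^ J = (2^J * \<delta>) * rho ^ J" by (simp flip: rho_2pow)
  also have "\<dots> \<le> 1 * rho ^ J" using h rho_pos by (intro mult_right_mono) auto
  finally show ?thesis by simp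
qed

lemma Phi_lower:
  assumes d0: "0 < \<bar>s - t\<bar>" and J: "1/2 < 2^J * \<bar>s - t\<bar>" "2^J * \<bar>s - t\<bar> \<le> 1"
  shows "sqrt \<bar>s - t\<bar> \<le> cmod (Phi (J mod 10) s - Phi (J mod 10) t)"
proof -
  define r where "r = J mod 10"
  define m0 where "m0 = J div 10"
  define \<delta> where "\<delta> = \<bar>s - t\<bar>"
  define d where "d = (\<lambda>m. aj (m * 10 + r) s - aj (m * 10 + r) t)"
  have Jeq: "J = m0 * 10 + r" unfolding r_def m0_def by simp
  have wJ: "\<delta> * sqrt 2 ^ J \<le> rho ^ J" using key_wJ[of \<delta> J] J d0 unfolding \<delta>_def by simp
  have B: "(0::real) \<le> 4 * rho ^ J" using rho_pos by simp
  have lo: "norm (d m) \<le> 4 * rho ^ J * (1/32)^(m0 - m)" if m: "m < m0" for m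
  proof -
    have "J = (m * 10 + r) + 10 * (m0 - m)" using m Jeq by (simp add: algebra_simps diff_mult_distrib2)
    then have "sqrt 2 ^ J = sqrt 2 ^ (m * 10 + r) * 32 ^ (m0 - m)" by (simp add: w_pow_add)
    then have e: "sqrt 2 ^ (m * 10 + r) = sqrt 2 ^ J * (1/32) ^ (m0 - m)"
      by (simp add: field_simps power_one_over)
    have "norm (d m) \<le> pi * sqrt 2 ^ (m * 10 + r) * \<delta>" unfolding d_def \<delta>_def by (rule aj_diff_up1)
    also have "\<dots> = pi * (1/32)^(m0 - m) * (\<delta> * sqrt 2 ^ J)" unfolding e by (simp add: algebra_simps)
    also have "\<dots> \<le> pi * (1/32)^(m0 - m) * rho ^ J" using wJ by (intro mult_left_mono) auto
    also have "\<dots> \<le> 4 * (1/32)^(m0 - m) * rho ^ J" using pi_less_4 rho_pos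
      by (intro mult_right_mono) auto
    finally show ?thesis by (simp add: algebra_simps)
  qed
  have hi: "norm (d (n + Suc m0)) \<le> 4 * rho ^ J * (1/32)^(Suc n)" for n
  proof -
    have "(n + Suc m0) * 10 + r = J + 10 * Suc n" using Jeq by (simp add: algebra_simps)
    then have e: "rho ^ ((n + Suc m0) * 10 + r) = rho ^ J * (1/32)^(Suc n)" by (simp only: rho_pow_add)
    have "norm (d (n + Suc m0)) \<le> 2 * rho ^ ((n + Suc m0) * 10 + r)" unfolding d_def by (rule aj_diff_up2)
    also have "\<dots> \<le> 4 * rho ^ J * (1/32)^(Suc n)" unfolding e using rho_pos by simp
    finally show ?thesis .
  qed
  have sd: "summable d" unfolding d_def by (rule summable_aj_diff)
  have rest: "norm (suminf d - d m0) \<le> 2 * (4 * rho ^ J * (1/32) / (1 - 1/32))"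
    by (rule geo_split[OF sd _ _ B lo hi]) auto
  have main: "sqrt 2 * rho ^ J \<le> norm (d m0)"
    unfolding d_def using aj_diff_low[of J s t] J Jeq by simp
  have "norm (d m0) \<le> norm (suminf d) + norm (suminf d - d m0)"
    by (metis norm_triangle_ineq2 add.commute diff_le_eq norm_minus_commute)
  then have "sqrt 2 * rho ^ J - 8/31 * rho ^ J \<le> norm (suminf d)" using main rest by simp
  moreover have "rho ^ J \<le> sqrt 2 * rho ^ J - 8/31 * rho ^ J"
  proof -
    have "sqrt 2 \<ge> 1 + 8/31" by (rule real_le_rsqrt) (simp add: power2_eq_square)
    then show ?thesis using rho_pos
      by (metis (no_types, lifting) left_diff_distrib mult_1 mult_right_mono add_le_imp_le_diff zero_le_power less_imp_le)
  qed
  moreover have "sqrt \<delta> \<le> rho ^ J"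
  proof -
    have "\<delta> \<le> 1 / 2^J" using J unfolding \<delta>_def by (simp add: field_simps)
    then have "\<delta> \<le> (rho ^ J)^2" by (simp add: rho_pow_sq)
    then show ?thesis using rho_pos by (simp add: real_sqrt_le_iff real_le_lsqrt)
  qed
  moreover have "suminf d = Phi r s - Phi r t" unfolding d_def Phi_diff ..
  ultimately show ?thesis unfolding \<delta>_def r_def by simp
qed

lemma Phi_upper:
  assumes d0: "0 < \<bar>s - t\<bar>" and J: "1/2 < 2^J * \<bar>s - t\<bar>" "2^J * \<bar>s - t\<bar> \<le> 1"
    and r: "r < 10"
  shows "cmod (Phi r s - Phi r t) \<le> 200 * sqrt \<bar>s - t\<bar>"
proof -
  define m0 where "m0 = J div 10"
  define j0 where "j0 = m0 * 10 + r"
  define \<delta> where "\<delta> = \<bar>s - t\<bar>"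
  define d where "d = (\<lambda>m. aj (m * 10 + r) s - aj (m * 10 + r) t)"
  have Jeq: "J = m0 * 10 + J mod 10" unfolding m0_def by simp
  have j0J: "j0 \<le> J + 10" "J \<le> j0 + 10" unfolding j0_def using Jeq r by linarith+
  have wJ: "\<delta> * sqrt 2 ^ J \<le> rho ^ J" using key_wJ[of \<delta> J] J d0 unfolding \<delta>_def by simp
  have wj0: "sqrt 2 ^ j0 \<le> 32 * sqrt 2 ^ J"
  proof -
    have e: "sqrt 2 ^ (J + 10 * 1) = sqrt 2 ^ J * 32 ^ 1" by (rule w_pow_add)
    have "sqrt 2 ^ j0 \<le> sqrt 2 ^ (J + 10 * 1)" using j0J by (intro power_increasing) auto
    then show ?thesis unfolding e by simp
  qed
  have rj0: "rho ^ j0 \<le> 32 * rho ^ J"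
  proof -
    have e: "rho ^ (j0 + 10 * 1) = rho ^ j0 * (1/32) ^ 1" by (rule rho_pow_add)
    have "rho ^ (j0 + 10 * 1) \<le> rho ^ J" using j0J rho_pos rho_lt1 by (intro power_decreasing) auto
    then show ?thesis unfolding e by simp
  qed
  have B: "(0::real) \<le> 128 * rho ^ J" using rho_pos by simp
  have lo: "norm (d m) \<le> 128 * rho ^ J * (1/32)^(m0 - m)" if m: "m \<le> m0" for m
  proof -
    have "j0 = (m * 10 + r) + 10 * (m0 - m)" using m unfolding j0_def by (simp add: algebra_simps diff_mult_distrib2)
    then have "sqrt 2 ^ j0 = sqrt 2 ^ (m * 10 + r) * 32 ^ (m0 - m)" by (simp add: w_pow_add)
    then have e: "sqrt 2 ^ (m * 10 + r) = sqrt 2 ^ j0 * (1/32) ^ (m0 - m)"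
      by (simp add: field_simps power_one_over)
    have "norm (d m) \<le> pi * sqrt 2 ^ (m * 10 + r) * \<delta>" unfolding d_def \<delta>_def by (rule aj_diff_up1)
    also have "\<dots> = pi * (1/32)^(m0 - m) * sqrt 2 ^ j0 * \<delta>" unfolding e by (simp add: algebra_simps)
    also have "\<dots> \<le> pi * (1/32)^(m0 - m) * (32 * sqrt 2 ^ J) * \<delta>"
      using wj0 \<delta>_def by (intro mult_right_mono mult_left_mono) auto
    also have "\<dots> = 32 * pi * (1/32)^(m0 - m) * (\<delta> * sqrt 2 ^ J)" by (simp add: algebra_simps)
    also have "\<dots> \<le> 32 * pi * (1/32)^(m0 - m) * rho ^ J" using wJ by (intro mult_left_mono) auto
    also have "\<dots> \<le> 32 * 4 * (1/32)^(m0 - m) * rho ^ J" using pi_less_4 rho_pos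
      by (intro mult_right_mono) auto
    finally show ?thesis by (simp add: algebra_simps)
  qed
  have hi: "norm (d (n + Suc m0)) \<le> 128 * rho ^ J * (1/32)^(Suc n)" for n
  proof -
    have "(n + Suc m0) * 10 + r = j0 + 10 * Suc n" unfolding j0_def by (simp add: algebra_simps)
    then have e: "rho ^ ((n + Suc m0) * 10 + r) = rho ^ j0 * (1/32)^(Suc n)" by (simp only: rho_pow_add)
    have "norm (d (n + Suc m0)) \<le> 2 * rho ^ ((n + Suc m0) * 10 + r)" unfolding d_def by (rule aj_diff_up2)
    also have "\<dots> = 2 * rho ^ j0 * (1/32)^(Suc n)" unfolding e by simp
    also have "\<dots> \<le> 2 * (32 * rho ^ J) * (1/32)^(Suc n)" using rj0 by (intro mult_right_mono) auto
    also have "\<dots> \<le> 128 * rho ^ J * (1/32)^(Suc n)" using rho_pos by (intro mult_right_mono) auto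
    finally show ?thesis .
  qed
  have sd: "summable d" unfolding d_def by (rule summable_aj_diff)
  have rest: "norm (suminf d - d m0) \<le> 2 * (128 * rho ^ J * (1/32) / (1 - 1/32))"
    by (rule geo_split[OF sd _ _ B lo hi]) auto
  have main: "norm (d m0) \<le> 128 * rho ^ J" using lo[of m0] by simp
  have "norm (suminf d) \<le> norm (d m0) + norm (suminf d - d m0)"
    by (metis norm_triangle_ineq add.commute diff_add_cancel)
  moreover have rest': "norm (suminf d - d m0) * 31 \<le> 256 * rho ^ J" using rest by simp
  moreover have "0 \<le> rho ^ J" using rho_pos by simp
  ultimately have "norm (suminf d) \<le> 137 * rho ^ J" using main by linarith
  moreover have "rho ^ J \<le> sqrt 2 * sqrt \<delta>"
  proof -
    have "1 / 2^J \<le> 2 * \<delta>" using J unfolding \<delta>_def by (simp add: field_simps)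
    then have "(rho ^ J)^2 \<le> 2 * \<delta>" by (simp add: rho_pow_sq)
    then show ?thesis using rho_pos by (metis real_le_rsqrt real_sqrt_mult)
  qed
  moreover have "suminf d = Phi r s - Phi r t" unfolding d_def Phi_diff ..
  ultimately have "cmod (Phi r s - Phi r t) \<le> 137 * (sqrt 2 * sqrt \<delta>)"
    by (metis mult_left_mono order_trans zero_le_numeral)
  also have "\<dots> \<le> 200 * sqrt \<delta>"
  proof -
    have "sqrt 2 \<le> 142/100" by (rule real_le_lsqrt) (auto simp: power2_eq_square)
    moreover have "0 \<le> sqrt \<delta>" unfolding \<delta>_def by simp
    ultimately have "137 * (sqrt 2 * sqrt \<delta>) \<le> 137 * (142/100 * sqrt \<delta>)"
      by (intro mult_left_mono mult_right_mono) auto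
    then show ?thesis using \<open>0 \<le> sqrt \<delta>\<close> by linarith
  qed
  finally show ?thesis unfolding \<delta>_def .
qed

definition snow :: "real \<Rightarrow> nat \<Rightarrow> real" where
  "snow t i = (if even i then Re (Phi (i div 2) t) else Im (Phi (i div 2) t))"

lemma sum_pairs: "(\<Sum>i<2*n. f i) = (\<Sum>r<n. f (2*r) + f (2*r+1))" for f :: "nat \<Rightarrow> real"
  by (induction n) auto

lemma snow_sq: "(\<Sum>i<20. (snow s i - snow t i)^2) = (\<Sum>r<10. (cmod (Phi r s - Phi r t))^2)"
proof -
  have "(\<Sum>i<20. (snow s i - snow t i)^2) = (\<Sum>i<2*10. (snow s i - snow t i)^2)" by simp
  also have "\<dots> = (\<Sum>r<10. (snow s (2*r) - snow t (2*r))^2 + (snow s (2*r+1) - snow t (2*r+1))^2)"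
    by (rule sum_pairs)
  also have "\<dots> = (\<Sum>r<10. (cmod (Phi r s - Phi r t))^2)"
    by (intro sum.cong refl) (simp add: snow_def cmod_power2)
  finally show ?thesis .
qed

lemma snow_bound: "eucl_dist 20 (snow t) (\<lambda>_. 0) \<le> 13"
proof -
  have "(\<Sum>i<20. (snow t i - 0)^2) = (\<Sum>r<10. (cmod (Phi r t - 0))^2)"
  proof -
    have "(\<Sum>i<20. (snow t i - 0)^2) = (\<Sum>i<20. (snow t i - snow 0 i * 0)^2)" by simp
    show ?thesis
      using sum_pairs[of "\<lambda>i. (snow t i - 0)^2" 10] by (simp add: snow_def cmod_power2)
  qed
  also have "\<dots> \<le> (\<Sum>r<(10::nat). (16::real))"
    by (intro sum_mono) (use power_mono[OF Phi_bound norm_ge_zero, of _ _ 2] in simp)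
  finally have "(\<Sum>i<20. (snow t i - 0)^2) \<le> 169" by simp
  then show ?thesis unfolding eucl_dist_def by (intro real_le_lsqrt) auto
qed

lemma snow_main:
  assumes "\<bar>s - t\<bar> \<le> 1"
  shows "sqrt \<bar>s - t\<bar> \<le> eucl_dist 20 (snow s) (snow t)"
    and "eucl_dist 20 (snow s) (snow t) \<le> 700 * sqrt \<bar>s - t\<bar>"
proof -
  have eq: "eucl_dist 20 (snow s) (snow t) = sqrt (\<Sum>r<10. (cmod (Phi r s - Phi r t))^2)"
    unfolding eucl_dist_def snow_sq ..
  have "sqrt \<bar>s - t\<bar> \<le> eucl_dist 20 (snow s) (snow t) \<and>
        eucl_dist 20 (snow s) (snow t) \<le> 700 * sqrt \<bar>s - t\<bar>"
  proof (cases "s = t")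
    case True
    then show ?thesis by (simp add: eucl_dist_def)
  next
    case False
    then have d0: "0 < \<bar>s - t\<bar>" by simp
    obtain J where J: "1/2 < 2^J * \<bar>s - t\<bar>" "2^J * \<bar>s - t\<bar> \<le> 1"
      using exJ[OF d0 assms] by blast
    have low: "sqrt \<bar>s - t\<bar> \<le> cmod (Phi (J mod 10) s - Phi (J mod 10) t)"
      by (rule Phi_lower[OF d0 J])
    have "(cmod (Phi (J mod 10) s - Phi (J mod 10) t))^2 \<le> (\<Sum>r<10. (cmod (Phi r s - Phi r t))^2)"
      by (rule member_le_sum[where f="\<lambda>r. (cmod (Phi r s - Phi r t))^2"]) auto
    then have "cmod (Phi (J mod 10) s - Phi (J mod 10) t) \<le> eucl_dist 20 (snow s) (snow t)"
      unfolding eq by (rule real_le_rsqrt)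
    moreover
    have "(\<Sum>r<10. (cmod (Phi r s - Phi r t))^2) \<le> (\<Sum>r<(10::nat). (200 * sqrt \<bar>s - t\<bar>)^2)"
      by (intro sum_mono power_mono Phi_upper[OF d0 J]) auto
    then have a: "(\<Sum>r<10. (cmod (Phi r s - Phi r t))^2) \<le> 400000 * \<bar>s - t\<bar>"
      by (simp add: power_mult_distrib)
    have b: "400000 * \<bar>s - t\<bar> \<le> (700 * sqrt \<bar>s - t\<bar>)^2"
      by (simp add: power_mult_distrib)
    from order_trans[OF a b] have "(\<Sum>r<10. (cmod (Phi r s - Phi r t))^2) \<le> (700 * sqrt \<bar>s - t\<bar>)^2" .
    then have "eucl_dist 20 (snow s) (snow t) \<le> 700 * sqrt \<bar>s - t\<bar>"
      unfolding eq by (intro real_le_lsqrt) auto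
    ultimately show ?thesis using low by linarith
  qed
  then show "sqrt \<bar>s - t\<bar> \<le> eucl_dist 20 (snow s) (snow t)"
    and "eucl_dist 20 (snow s) (snow t) \<le> 700 * sqrt \<bar>s - t\<bar>" by auto
qed

lemma L2_scale: "L2_set (\<lambda>i. c * f i) A = \<bar>c\<bar> * L2_set f A"
  unfolding L2_set_def
  by (simp add: power_mult_distrib real_sqrt_mult flip: sum_distrib_left)

lemma lin_est:
  fixes P P' :: real
  assumes P: "P \<ge> 0" and v: "L2_set v A \<le> 13"
  shows "L2_set (\<lambda>i. P * u i - P' * v i) A \<le> P * L2_set (\<lambda>i. u i - v i) A + 13 * \<bar>P - P'\<bar>"
    and "P * L2_set (\<lambda>i. u i - v i) A \<le> L2_set (\<lambda>i. P * u i - P' * v i) A + 13 * \<bar>P - P'\<bar>"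
proof -
  have vb: "\<bar>P - P'\<bar> * L2_set v A \<le> 13 * \<bar>P - P'\<bar>"
    using v by (metis abs_ge_zero mult.commute mult_left_mono)
  have "L2_set (\<lambda>i. P * u i - P' * v i) A =
        L2_set (\<lambda>i. P * (u i - v i) + (P - P') * v i) A"
    by (intro arg_cong[where f="\<lambda>f. L2_set f A"] ext) (simp add: algebra_simps)
  also have "\<dots> \<le> L2_set (\<lambda>i. P * (u i - v i)) A + L2_set (\<lambda>i. (P - P') * v i) A"
    by (rule L2_set_triangle_ineq)
  also have "\<dots> = P * L2_set (\<lambda>i. u i - v i) A + \<bar>P - P'\<bar> * L2_set v A"
    using P by (simp add: L2_scale)
  finally show "L2_set (\<lambda>i. P * u i - P' * v i) A \<le> P * L2_set (\<lambda>i. u i - v i) A + 13 * \<bar>P - P'\<bar>"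
    using vb by linarith
  have "P * L2_set (\<lambda>i. u i - v i) A = L2_set (\<lambda>i. P * (u i - v i)) A"
    using P by (simp add: L2_scale)
  also have "\<dots> = L2_set (\<lambda>i. (P * u i - P' * v i) + (P' - P) * v i) A"
    by (intro arg_cong[where f="\<lambda>f. L2_set f A"] ext) (simp add: algebra_simps)
  also have "\<dots> \<le> L2_set (\<lambda>i. P * u i - P' * v i) A + L2_set (\<lambda>i. (P' - P) * v i) A"
    by (rule L2_set_triangle_ineq)
  also have "\<dots> = L2_set (\<lambda>i. P * u i - P' * v i) A + \<bar>P - P'\<bar> * L2_set v A"
    by (simp add: L2_scale abs_minus_commute)
  finally show "P * L2_set (\<lambda>i. u i - v i) A \<le> L2_set (\<lambda>i. P * u i - P' * v i) A + 13 * \<bar>P - P'\<bar>"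
    using vb by linarith
qed

lemma snow_L2: "L2_set (snow t) {..<20} \<le> 13"
  using snow_bound[of t] by (simp add: eucl_L2)

lemma snow_L2_diff: "eucl_dist 20 (snow s) (snow t) = L2_set (\<lambda>i. snow s i - snow t i) {..<20}"
  by (rule eucl_L2)

lemma sector_est:
  fixes P Q P' Q' :: real
  assumes h: "\<bar>Q\<bar> \<le> P" "\<bar>Q'\<bar> \<le> P'" "P \<le> P'"
  defines "eS \<equiv> L2_set (\<lambda>i. P * snow (Q/(2*P)) i - P' * snow (Q'/(2*P')) i) {..<20}"
  shows "eS \<le> 700 * sqrt \<bar>P * Q' - P' * Q\<bar> + 13 * \<bar>P - P'\<bar>"
    and "sqrt \<bar>P * Q' - P' * Q\<bar> \<le> 2 * eS + 26 * \<bar>P - P'\<bar>"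
proof -
  have eS0: "eS \<ge> 0" unfolding eS_def by (rule L2_set_nonneg)
  have "eS \<le> 700 * sqrt \<bar>P * Q' - P' * Q\<bar> + 13 * \<bar>P - P'\<bar> \<and>
        sqrt \<bar>P * Q' - P' * Q\<bar> \<le> 2 * eS + 26 * \<bar>P - P'\<bar>"
  proof (cases "P = 0")
    case True
    then have Q0: "Q = 0" using h by simp
    have "eS = L2_set (\<lambda>i. (-P') * snow (Q'/(2*P')) i) {..<20}"
      unfolding eS_def using True by simp
    also have "\<dots> = P' * L2_set (snow (Q'/(2*P'))) {..<20}"
      using L2_scale[of "-P'" "snow (Q'/(2*P'))" "{..<20}"] h True by simp
    also have "\<dots> \<le> P' * 13" using h True snow_L2 by (intro mult_left_mono) auto
    finally show ?thesis using True Q0 h eS0 by simp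
  next
    case False
    then have P0: "P > 0" using h by linarith
    then have P'0: "P' > 0" using h by linarith
    define t where "t = Q/(2*P)"
    define t' where "t' = Q'/(2*P')"
    have tb: "\<bar>t\<bar> \<le> 1/2" "\<bar>t'\<bar> \<le> 1/2" unfolding t_def t'_def using h P0 P'0
      by (simp_all add: abs_divide divide_le_eq abs_mult)
    then have dt: "\<bar>t - t'\<bar> \<le> 1" by linarith
    have cross: "P * Q' - P' * Q = 2 * P * P' * (t' - t)"
      unfolding t_def t'_def using P0 P'0 by (simp add: field_simps)
    then have acr: "\<bar>P * Q' - P' * Q\<bar> = 2 * P * P' * \<bar>t - t'\<bar>"
      using P0 P'0 by (simp add: abs_mult abs_minus_commute)
    define E where "E = L2_set (\<lambda>i. snow t i - snow t' i) {..<20}"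
    have E: "sqrt \<bar>t - t'\<bar> \<le> E" "E \<le> 700 * sqrt \<bar>t - t'\<bar>"
      using snow_main[OF dt] unfolding E_def snow_L2_diff by auto
    have le1: "eS \<le> P * E + 13 * \<bar>P - P'\<bar>" and le2: "P * E \<le> eS + 13 * \<bar>P - P'\<bar>"
      unfolding eS_def E_def t_def[symmetric] t'_def[symmetric]
      using lin_est[where P=P and P'=P' and u="snow t" and v="snow t'" and A="{..<20}"] snow_L2[of t'] P0
      by auto
    have "P * sqrt \<bar>t - t'\<bar> = sqrt (P^2 * \<bar>t - t'\<bar>)"
      using P0 by (simp add: real_sqrt_mult)
    also have "\<dots> \<le> sqrt \<bar>P * Q' - P' * Q\<bar>" unfolding acr
    proof (intro real_sqrt_le_mono mult_right_mono)
      have "P * P \<le> P * P'" using P0 h(3) by (intro mult_left_mono) auto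
      moreover have "0 \<le> P * P'" using P0 P'0 by simp
      ultimately show "P^2 \<le> 2 * P * P'" by (simp add: power2_eq_square)
    qed simp
    finally have ps: "P * sqrt \<bar>t - t'\<bar> \<le> sqrt \<bar>P * Q' - P' * Q\<bar>" .
    have up: "eS \<le> 700 * sqrt \<bar>P * Q' - P' * Q\<bar> + 13 * \<bar>P - P'\<bar>"
    proof -
      have "P * E \<le> P * (700 * sqrt \<bar>t - t'\<bar>)" using E P0 by (intro mult_left_mono) auto
      then show ?thesis using le1 ps by linarith
    qed
    have lo: "sqrt \<bar>P * Q' - P' * Q\<bar> \<le> 2 * eS + 26 * \<bar>P - P'\<bar>"
    proof (cases "P' \<le> 2 * P")
      case True
      have "2 * P * P' \<le> (2 * P)^2"
        using mult_left_mono[OF True, of "2 * P"] P0 by (simp add: power2_eq_square)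
      then have "\<bar>P * Q' - P' * Q\<bar> \<le> (2 * P)^2 * \<bar>t - t'\<bar>" unfolding acr
        by (intro mult_right_mono) auto
      then have "sqrt \<bar>P * Q' - P' * Q\<bar> \<le> sqrt ((2 * P)^2 * \<bar>t - t'\<bar>)" by (rule real_sqrt_le_mono)
      also have "\<dots> = 2 * P * sqrt \<bar>t - t'\<bar>" using P0 by (simp add: real_sqrt_mult)
      also have "\<dots> \<le> 2 * (P * E)" using E P0 by (simp add: mult_left_mono)
      finally show ?thesis using le2 by linarith
    next
      case False
      have "\<bar>P * Q' - P' * Q\<bar> \<le> 2 * P * P' * 1" unfolding acr
        using dt P0 P'0 by (intro mult_left_mono) auto
      also have "\<dots> \<le> (2 * (P' - P))^2"
      proof -
        have a: "P' * (2 * P) \<le> P' * P'" using False P'0 by (intro mult_left_mono) auto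
        have b: "P' \<le> 2 * (P' - P)" using False by (simp add: algebra_simps)
        have c: "P' * P' \<le> (2 * (P' - P)) * (2 * (P' - P))"
          by (rule mult_mono[OF b b]) (use P'0 b in auto)
        have "2 * P * P' * 1 = P' * (2 * P)" by simp
        then show ?thesis using a c unfolding power2_eq_square by linarith
      qed
      finally have "sqrt \<bar>P * Q' - P' * Q\<bar> \<le> sqrt ((2 * (P' - P))^2)" by (rule real_sqrt_le_mono)
      also have "\<dots> = 2 * \<bar>P - P'\<bar>" using False P0 by simp
      finally show ?thesis using eS0 abs_ge_zero[of "P - P'"] by argo
    qed
    show ?thesis using up lo by simp
  qed
  then show "eS \<le> 700 * sqrt \<bar>P * Q' - P' * Q\<bar> + 13 * \<bar>P - P'\<bar>"
    and "sqrt \<bar>P * Q' - P' * Q\<bar> \<le> 2 * eS + 26 * \<bar>P - P'\<bar>" by auto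
qed

definition secD :: "real \<times> real \<Rightarrow> real \<times> real \<Rightarrow> real" where
  "secD p q = sqrt ((fst p - fst q)^2 + (snd p - snd q)^2) + sqrt \<bar>fst p * snd q - fst q * snd p\<bar>"

definition secF :: "real \<times> real \<Rightarrow> nat \<Rightarrow> real" where
  "secF p = app 1 (\<lambda>_. fst p) (app 1 (\<lambda>_. snd p) (\<lambda>i. fst p * snow (snd p / (2 * fst p)) i))"

lemma secF_dist: "eucl_dist (1 + (1 + 20)) (secF p) (secF q) =
   sqrt ((sqrt ((fst p - fst q)^2 + (snd p - snd q)^2))^2 +
     (L2_set (\<lambda>i. fst p * snow (snd p / (2 * fst p)) i - fst q * snow (snd q / (2 * fst q)) i) {..<20})^2)"
  unfolding secF_def eucl_app eucl_one by (simp add: eucl_L2 add.assoc)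

lemma sector_model: "emb secD {p. \<bar>snd p\<bar> \<le> fst p}"
proof (rule embI[where c="1/29" and C=700 and f=secF and N="1 + (1 + 20)"])
  fix p q :: "real \<times> real" assume pq: "p \<in> {p. \<bar>snd p\<bar> \<le> fst p}" "q \<in> {p. \<bar>snd p\<bar> \<le> fst p}"
  obtain P Q where p: "p = (P, Q)" by (cases p)
  obtain P' Q' where q: "q = (P', Q')" by (cases q)
  have h: "\<bar>Q\<bar> \<le> P" "\<bar>Q'\<bar> \<le> P'" using pq p q by auto
  define eS where "eS = L2_set (\<lambda>i. P * snow (Q / (2 * P)) i - P' * snow (Q' / (2 * P')) i) {..<20}"
  define hh where "hh = sqrt ((P - P')^2 + (Q - Q')^2)"
  define cr where "cr = sqrt \<bar>P * Q' - P' * Q\<bar>"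
  have E: "eucl_dist (1 + (1 + 20)) (secF p) (secF q) = sqrt (hh^2 + eS^2)"
    unfolding secF_dist p q eS_def hh_def by simp
  have sD: "secD p q = hh + cr" unfolding secD_def p q hh_def cr_def by simp
  have eS0: "eS \<ge> 0" unfolding eS_def by (rule L2_set_nonneg)
  have hh0: "hh \<ge> 0" unfolding hh_def by simp
  have dP: "\<bar>P - P'\<bar> \<le> hh" unfolding hh_def by (rule real_le_rsqrt) simp
  have est: "eS \<le> 700 * cr + 13 * \<bar>P - P'\<bar> \<and> cr \<le> 2 * eS + 26 * \<bar>P - P'\<bar>"
  proof (cases "P \<le> P'")
    case True
    show ?thesis using sector_est[OF h True] unfolding eS_def cr_def by simp
  next
    case False
    have eSs: "eS = L2_set (\<lambda>i. P' * snow (Q' / (2 * P')) i - P * snow (Q / (2 * P)) i) {..<20}"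
      unfolding eS_def using L2_scale[of "-1" "\<lambda>i. P' * snow (Q' / (2 * P')) i - P * snow (Q / (2 * P)) i" "{..<20}"]
      by simp
    have crs: "cr = sqrt \<bar>P' * Q - P * Q'\<bar>" unfolding cr_def by (simp add: abs_minus_commute)
    show ?thesis using sector_est[OF h(2,1)] False unfolding eSs crs by (simp add: abs_minus_commute)
  qed
  note b = sqrt_sum_sq_bounds[OF hh0 eS0]
  show "1 / 29 * secD p q \<le> eucl_dist (1 + (1 + 20)) (secF p) (secF q)"
    unfolding E sD using b est dP by argo
  show "eucl_dist (1 + (1 + 20)) (secF p) (secF q) \<le> 700 * secD p q"
    unfolding E sD using b est dP by argo
  show "0 \<le> secD p q" unfolding secD_def by simp
qed simp

definition vD :: "real \<times> real \<Rightarrow> real \<times> real \<Rightarrow> real" where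
  "vD p q = \<bar>fst p - fst q\<bar> + sqrt \<bar>snd p - snd q\<bar>"

definition vF :: "real \<Rightarrow> real \<times> real \<Rightarrow> nat \<Rightarrow> real" where
  "vF R p = app 1 (\<lambda>_. fst p) (snow (snd p / (2 * R)))"

lemma vertical_model:
  assumes R: "R > 0"
  shows "emb vD {p. \<bar>snd p\<bar> \<le> R}"
proof -
  define k where "k = sqrt (2 * R)"
  have k: "k > 0" unfolding k_def using R by simp
  show ?thesis
  proof (rule embI[where c="min 1 (1/k) / 2" and C="1 + 700 / k" and f="vF R" and N="1 + 20"])
    show "0 < min 1 (1 / k) / 2" using k by simp
    fix p q :: "real \<times> real" assume pq: "p \<in> {p. \<bar>snd p\<bar> \<le> R}" "q \<in> {p. \<bar>snd p\<bar> \<le> R}"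
    define a where "a = snd p / (2 * R)"
    define b where "b = snd q / (2 * R)"
    have ab: "\<bar>a - b\<bar> = \<bar>snd p - snd q\<bar> / (2 * R)" unfolding a_def b_def using R
      by (simp add: diff_divide_distrib[symmetric] abs_divide)
    have ab1: "\<bar>a - b\<bar> \<le> 1" unfolding ab using pq R by (simp add: divide_le_eq)
    have sab: "sqrt \<bar>a - b\<bar> = sqrt \<bar>snd p - snd q\<bar> / k" unfolding ab k_def by (simp add: real_sqrt_divide)
    define eS where "eS = eucl_dist 20 (snow a) (snow b)"
    have eS: "sqrt \<bar>snd p - snd q\<bar> / k \<le> eS" "eS \<le> 700 * (sqrt \<bar>snd p - snd q\<bar> / k)"
      using snow_main[OF ab1] unfolding eS_def sab by auto
    have E: "eucl_dist (1 + 20) (vF R p) (vF R q) = sqrt (\<bar>fst p - fst q\<bar>^2 + eS^2)"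
      unfolding vF_def eucl_app eucl_one eS_def a_def b_def by simp
    have eS0: "eS \<ge> 0" unfolding eS_def by (rule eucl_nonneg)
    note bb = sqrt_sum_sq_bounds[OF abs_ge_zero eS0, of "fst p - fst q"]
    define s where "s = sqrt \<bar>snd p - snd q\<bar>"
    have s0: "s \<ge> 0" unfolding s_def by simp
    have "min 1 (1/k) * (\<bar>fst p - fst q\<bar> + s) \<le> \<bar>fst p - fst q\<bar> + s / k"
    proof -
      have "min 1 (1/k) * \<bar>fst p - fst q\<bar> \<le> \<bar>fst p - fst q\<bar>"
        by (metis abs_ge_zero min.cobounded1 mult_left_le_one_le mult_nonneg_nonneg order_trans min.commute
            mult_right_mono mult_1 zero_le_one)
      moreover have "min 1 (1/k) * s \<le> s / k" using s0
        by (metis divide_inverse inverse_eq_divide min.cobounded2 mult.commute mult_left_mono)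
      ultimately show ?thesis by (simp add: distrib_left)
    qed
    then show "min 1 (1 / k) / 2 * vD p q \<le> eucl_dist (1 + 20) (vF R p) (vF R q)"
      unfolding E vD_def s_def[symmetric] using bb eS unfolding s_def[symmetric] by argo
    have "700 * (s / k) \<le> 700 / k * s" by simp
    have "\<bar>fst p - fst q\<bar> + 700 * (s / k) \<le> (1 + 700 / k) * (\<bar>fst p - fst q\<bar> + s)"
    proof -
      have "0 \<le> 700 / k * \<bar>fst p - fst q\<bar>" using k by simp
      moreover have "(1 + 700/k) * (\<bar>fst p - fst q\<bar> + s) = \<bar>fst p - fst q\<bar> + s + 700/k * \<bar>fst p - fst q\<bar> + 700/k * s"
        by (simp add: algebra_simps add_divide_distrib)
      moreover have "700 * (s/k) = 700/k * s" by simp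
      ultimately show ?thesis using s0 by argo
    qed
    then show "eucl_dist (1 + 20) (vF R p) (vF R q) \<le> (1 + 700 / k) * vD p q"
      unfolding E vD_def s_def[symmetric] using bb eS unfolding s_def[symmetric] by argo
    show "0 \<le> vD p q" unfolding vD_def by simp
  qed
qed

interpretation kor: pmetric koranyi
proof
  show "koranyi x y = koranyi y x" for x y by (rule kor_sym)
  show "koranyi x z \<le> koranyi x y + koranyi y z" for x y z by (rule kor_triangle)
  show "0 \<le> koranyi x y" for x y by (rule kor_nonneg)
  show "koranyi x x = 0" for x by (rule kor_refl)
qed

lemma kor_upper': "koranyi p q \<le> sqrt (kH p q) + 2 * sqrt \<bar>kV p q\<bar>" by (rule kor_upper)

lemma vert_piece:
  assumes cs: "c^2 + s^2 = 1" and T: "\<And>p. p \<in> T \<Longrightarrow> c * p$1 + s * p$2 = k"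
    and R: "\<And>p i. p \<in> T \<Longrightarrow> \<bar>p$i\<bar> \<le> R"
  shows "emb koranyi T"
proof -
  define u where "u = (\<lambda>p::real^3. - s * p$1 + c * p$2)"
  define w where "w = (\<lambda>p::real^3. p$3 - k / 2 * u p)"
  have x: "p$1 = c * k - s * u p" "p$2 = s * k + c * u p" if "p \<in> T" for p
  proof -
    have "c * k - s * u p = (c^2 + s^2) * p$1" unfolding T[OF that, symmetric] u_def
      by (simp add: algebra_simps power2_eq_square)
    then show "p$1 = c * k - s * u p" using cs by simp
    have "s * k + c * u p = (c^2 + s^2) * p$2" unfolding T[OF that, symmetric] u_def
      by (simp add: algebra_simps power2_eq_square)
    then show "p$2 = s * k + c * u p" using cs by simp
  qed
  have H: "kH p q = (u p - u q)^2" and V: "kV p q = w p - w q" if "p \<in> T" "q \<in> T" for p q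
  proof -
    have "kH p q = (c * k - s * u p - (c * k - s * u q))^2 + (s * k + c * u p - (s * k + c * u q))^2"
      by (simp only: kH_def x[OF that(1)] x[OF that(2)])
    also have "\<dots> = (c^2 + s^2) * (u p - u q)^2" by (simp add: power2_eq_square algebra_simps)
    finally show "kH p q = (u p - u q)^2" using cs by simp
    have "kV p q = p$3 - q$3 + 1/2 * ((c * k - s * u p) * (s * k + c * u q) - (c * k - s * u q) * (s * k + c * u p))"
      by (simp only: kV_def x[OF that(1)] x[OF that(2)])
    also have "(c * k - s * u p) * (s * k + c * u q) - (c * k - s * u q) * (s * k + c * u p) = k * (c^2 + s^2) * (u q - u p)"
      by algebra
    finally show "kV p q = w p - w q" using cs unfolding w_def by (simp add: algebra_simps)
  qed
  have "c^2 \<le> 1" using cs zero_le_power2[of s] by linarith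
  moreover have "s^2 \<le> 1" using cs zero_le_power2[of c] by linarith
  ultimately have cb: "\<bar>c\<bar> \<le> 1" "\<bar>s\<bar> \<le> 1" by (simp_all add: abs_square_le_1)
  define R' where "R' = R + \<bar>k\<bar> * R + 1"
  have R0: "R \<ge> 0" if "p \<in> T" for p using R[OF that, of 1] by simp
  have wb: "\<bar>w p\<bar> \<le> R'" if p: "p \<in> T" for p
  proof -
    have "\<bar>u p\<bar> \<le> \<bar>- s * p$1\<bar> + \<bar>c * p$2\<bar>" unfolding u_def by (rule abs_triangle_ineq)
    also have "\<dots> = \<bar>s\<bar> * \<bar>p$1\<bar> + \<bar>c\<bar> * \<bar>p$2\<bar>" by (simp add: abs_mult)
    also have "\<dots> \<le> 1 * R + 1 * R" using cb R[OF p] by (intro add_mono mult_mono) auto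
    finally have "\<bar>u p\<bar> \<le> 2 * R" by simp
    then have "\<bar>k\<bar> / 2 * \<bar>u p\<bar> \<le> \<bar>k\<bar> / 2 * (2 * R)" by (intro mult_left_mono) auto
    then have "\<bar>k / 2 * u p\<bar> \<le> \<bar>k\<bar> * R" by (simp add: abs_mult)
    then show ?thesis unfolding w_def R'_def using R[OF p, of 3] by argo
  qed
  have R'0: "R' > 0" if "T \<noteq> {}" using that R0 unfolding R'_def by (auto intro!: add_nonneg_pos)
  show ?thesis
  proof (cases "T = {}")
    case True
    then show ?thesis by (simp add: emb_empty)
  next
    case False
    show ?thesis
    proof (rule emb_transfer[OF vertical_model[OF R'0[OF False]], where phi="\<lambda>p. (u p, w p)" and c="1/2" and C=2])
      show "(\<lambda>p. (u p, w p)) ` T \<subseteq> {p. \<bar>snd p\<bar> \<le> R'}" using wb by auto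
      fix p q assume pq: "p \<in> T" "q \<in> T"
      have vd: "vD (u p, w p) (u q, w q) = sqrt (kH p q) + sqrt \<bar>kV p q\<bar>"
        unfolding vD_def H[OF pq] V[OF pq] by simp
      show "1 / 2 * koranyi p q \<le> vD (u p, w p) (u q, w q)"
        using kor_upper[of p q] real_sqrt_ge_zero[OF kH_nonneg[of p q]] unfolding vd by argo
      show "vD (u p, w p) (u q, w q) \<le> 2 * koranyi p q"
        using kor_lower[of p q] real_sqrt_ge_zero[OF abs_ge_zero[of "kV p q"]] unfolding vd by argo
      show "0 \<le> koranyi p q" by (rule kor_nonneg)
    qed simp
  qed
qed

lemma sector_piece:
  assumes T: "\<And>p. p \<in> T \<Longrightarrow> p$3 = al * p$1 + be * p$2 + ga" and ab: "a^2 + b^2 = 1"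
  shows "emb koranyi {p \<in> T. \<bar>- b * (p$1 - 2 * be) + a * (p$2 + 2 * al)\<bar> \<le> a * (p$1 - 2 * be) + b * (p$2 + 2 * al)}"
proof -
  define X where "X = (\<lambda>p::real^3. p$1 - 2 * be)"
  define Y where "Y = (\<lambda>p::real^3. p$2 + 2 * al)"
  define P where "P = (\<lambda>p. a * X p + b * Y p)"
  define Q where "Q = (\<lambda>p. - b * X p + a * Y p)"
  have set_eq: "{p \<in> T. \<bar>- b * (p$1 - 2 * be) + a * (p$2 + 2 * al)\<bar> \<le> a * (p$1 - 2 * be) + b * (p$2 + 2 * al)}
      = {p \<in> T. \<bar>Q p\<bar> \<le> P p}" unfolding P_def Q_def X_def Y_def ..
  have H: "kH p q = (P p - P q)^2 + (Q p - Q q)^2" for p q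
  proof -
    have "(P p - P q)^2 + (Q p - Q q)^2 = (a^2 + b^2) * ((X p - X q)^2 + (Y p - Y q)^2)"
      unfolding P_def Q_def by algebra
    then show ?thesis using ab unfolding kH_def X_def Y_def by simp
  qed
  have V: "kV p q = 1/2 * (P p * Q q - P q * Q p)" if "p \<in> T" "q \<in> T" for p q
  proof -
    have "P p * Q q - P q * Q p = (a^2 + b^2) * (X p * Y q - X q * Y p)"
      unfolding P_def Q_def by algebra
    moreover have "kV p q = 1/2 * (X p * Y q - X q * Y p)"
      unfolding kV_def T[OF that(1)] T[OF that(2)] X_def Y_def by (simp add: algebra_simps)
    ultimately show ?thesis using ab by simp
  qed
  show ?thesis unfolding set_eq
  proof (rule emb_transfer[OF sector_model, where phi="\<lambda>p. (P p, Q p)" and c="1/2" and C=2])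
    show "(\<lambda>p. (P p, Q p)) ` {p \<in> T. \<bar>Q p\<bar> \<le> P p} \<subseteq> {p. \<bar>snd p\<bar> \<le> fst p}" by auto
    fix p q assume pq: "p \<in> {p \<in> T. \<bar>Q p\<bar> \<le> P p}" "q \<in> {p \<in> T. \<bar>Q p\<bar> \<le> P p}"
    then have pT: "p \<in> T" "q \<in> T" by auto
    have cr: "\<bar>P p * Q q - P q * Q p\<bar> = 2 * \<bar>kV p q\<bar>" unfolding V[OF pT] by simp
    have sd: "secD (P p, Q p) (P q, Q q) = sqrt (kH p q) + sqrt 2 * sqrt \<bar>kV p q\<bar>"
      unfolding secD_def H by (simp add: cr real_sqrt_mult)
    have s2: "1 \<le> sqrt 2" "sqrt 2 \<le> 2" by (auto simp: real_le_rsqrt real_sqrt_le_iff intro: real_le_lsqrt)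
    have k0: "0 \<le> sqrt (kH p q)" "0 \<le> sqrt \<bar>kV p q\<bar>" using kH_nonneg by auto
    have m1: "sqrt \<bar>kV p q\<bar> \<le> sqrt 2 * sqrt \<bar>kV p q\<bar>" using mult_right_mono[OF s2(1) k0(2)] by simp
    have m2: "sqrt 2 * sqrt \<bar>kV p q\<bar> \<le> 2 * sqrt \<bar>kV p q\<bar>" using mult_right_mono[OF s2(2) k0(2)] by simp
    show "1 / 2 * koranyi p q \<le> secD (P p, Q p) (P q, Q q)"
      unfolding sd using kor_upper[of p q] m1 k0 by argo
    show "secD (P p, Q p) (P q, Q q) \<le> 2 * koranyi p q"
      unfolding sd using kor_lower[of p q] m2 k0 by argo
    show "0 \<le> koranyi p q" by (rule kor_nonneg)
  qed simp
qed

lemma nonvert_piece: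
  assumes T: "\<And>p. p \<in> T \<Longrightarrow> p$3 = al * p$1 + be * p$2 + ga"
  shows "emb koranyi T"
proof -
  define A where "A = (\<lambda>a b. {p \<in> T. \<bar>- b * (p$1 - 2 * be) + a * (p$2 + 2 * al)\<bar> \<le> a * (p$1 - 2 * be) + b * (p$2 + 2 * al)})"
  have e: "emb koranyi (A a b)" if "a^2 + b^2 = 1" for a b :: real
    unfolding A_def by (rule sector_piece[OF T that])
  have "T \<subseteq> A 1 0 \<union> A (-1) 0 \<union> (A 0 1 \<union> A 0 (-1))"
  proof
    fix p assume p: "p \<in> T"
    define x where "x = p$1 - 2 * be"
    define y where "y = p$2 + 2 * al"
    have "\<bar>y\<bar> \<le> x \<or> \<bar>y\<bar> \<le> - x \<or> \<bar>x\<bar> \<le> y \<or> \<bar>x\<bar> \<le> - y" by linarith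
    moreover have mem: "p \<in> A a b \<longleftrightarrow> \<bar>- b * x + a * y\<bar> \<le> a * x + b * y" for a b
      unfolding A_def x_def y_def using p by simp
    ultimately show "p \<in> A 1 0 \<union> A (-1) 0 \<union> (A 0 1 \<union> A 0 (-1))"
      using mem[of 1 0] mem[of "-1" 0] mem[of 0 1] mem[of 0 "-1"] by auto
  qed
  moreover have "emb koranyi (A 1 0 \<union> A (-1) 0 \<union> (A 0 1 \<union> A 0 (-1)))"
    by (intro kor.emb_Un e) auto
  ultimately show ?thesis by (rule emb_subset[rotated])
qed

lemma inner3: "n \<bullet> p = n$1 * p$1 + n$2 * p$2 + n$3 * (p::real^3)$3"
  by (simp add: inner_vec_def sum_3)

lemma plane_piece:
  assumes n: "n \<noteq> 0" and T: "\<And>p. p \<in> T \<Longrightarrow> n \<bullet> p = k"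
    and R: "\<And>p i. p \<in> T \<Longrightarrow> \<bar>p$i\<bar> \<le> R"
  shows "emb koranyi T"
proof (cases "n$3 = 0")
  case False
  show ?thesis
  proof (rule nonvert_piece)
    fix p assume p: "p \<in> T"
    have "n$1 * p$1 + n$2 * p$2 + n$3 * p$3 = k" using T[OF p] by (simp add: inner3)
    then show "p$3 = (- n$1 / n$3) * p$1 + (- n$2 / n$3) * p$2 + k / n$3"
      using False by (simp add: field_simps)
  qed
next
  case True
  have nz: "n$1 \<noteq> 0 \<or> n$2 \<noteq> 0"
  proof (rule ccontr)
    assume "\<not> (n$1 \<noteq> 0 \<or> n$2 \<noteq> 0)"
    then have "n = 0" using True by (simp add: vec_eq_iff forall_3)
    then show False using n by simp
  qed
  then have pos: "(n$1)^2 + (n$2)^2 > 0" by (auto simp: add_pos_nonneg add_nonneg_pos)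
  define L where "L = sqrt ((n$1)^2 + (n$2)^2)"
  have L: "L > 0" "L^2 = (n$1)^2 + (n$2)^2" unfolding L_def using pos by auto
  show ?thesis
  proof (rule vert_piece[where c="n$1 / L" and s="n$2 / L" and k="k / L"])
    show "(n$1 / L)^2 + (n$2 / L)^2 = 1" using L pos nz by (simp add: power_divide flip: add_divide_distrib)
    fix p assume p: "p \<in> T"
    have "n$1 * p$1 + n$2 * p$2 = k" using T[OF p] True by (simp add: inner3)
    then show "n$1 / L * p$1 + n$2 / L * p$2 = k / L" using L by (simp add: field_simps)
  next
    fix p i assume "p \<in> T" then show "\<bar>p$i\<bar> \<le> R" by (rule R)
  qed
qed

lemma no_interior:
  assumes man: "topological_2_manifold M" and TM: "T \<subseteq> M"
  shows "interior T = {}"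
proof (rule ccontr)
  assume "interior T \<noteq> {}"
  then obtain x where x: "x \<in> interior T" by blast
  then have xM: "x \<in> M" using TM interior_subset by blast
  obtain U where U: "openin (top_of_set M) U" "x \<in> U"
    and "\<exists>V :: (real^2) set. open V \<and> U homeomorphic V"
    using man xM unfolding topological_2_manifold_def by blast
  then obtain V :: "(real^2) set" where "U homeomorphic V" by blast
  then obtain h g where hg: "homeomorphism U V h g" unfolding homeomorphic_def by blast
  then have ch: "continuous_on U h" and inj: "inj_on h U"
    unfolding homeomorphism_def by (auto intro: inj_on_inverseI)
  obtain Op where O: "open Op" "U = M \<inter> Op" using U(1) openin_open by blast
  define W where "W = interior T \<inter> Op"
  have W: "open W" "x \<in> W" "W \<subseteq> U" unfolding W_def using O x U(2) TM interior_subset by auto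
  have "DIM(real^3) \<le> DIM(real^2)"
    by (rule invariance_of_dimension[of W h]) (use W ch inj in \<open>auto intro: continuous_on_subset inj_on_subset\<close>)
  then show False by simp
qed

theorem theorem1p2:
  fixes M :: "(real^3) set"
  assumes "compact M" and "pl_2_manifold M"
  shows "\<exists>N::nat. \<exists>f :: real^3 \<Rightarrow> (nat \<Rightarrow> real). \<exists>L.
           bi_lipschitz_on L M koranyi (eucl_dist N) f"
proof -
  obtain \<T> where tri: "triangulation \<T>" "\<Union>\<T> = M" and man: "topological_2_manifold M"
    using assms(2) unfolding pl_2_manifold_def by blast
  obtain R where R: "\<And>p. p \<in> M \<Longrightarrow> norm p \<le> R"
    using compact_imp_bounded[OF assms(1)] unfolding bounded_iff by blast
  have "emb koranyi (\<Union>\<T>)"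
  proof (rule kor.emb_Union)
    show "finite \<T>" using tri(1) unfolding triangulation_def by blast
    fix T assume T: "T \<in> \<T>"
    have TM: "T \<subseteq> M" using T tri(2) by blast
    have "convex T" using T tri(1) unfolding triangulation_def simplex_def by (auto intro: convex_convex_hull)
    moreover have "interior T = {}" by (rule no_interior[OF man TM])
    ultimately obtain a b where ab: "a \<noteq> 0" "T \<subseteq> {x. a \<bullet> x = b}"
      by (rule empty_interior_subset_hyperplane)
    show "emb koranyi T"
    proof (rule plane_piece[OF ab(1)])
      show "\<And>p. p \<in> T \<Longrightarrow> a \<bullet> p = b" using ab(2) by blast
      fix p i assume "p \<in> T"
      then have "norm p \<le> R" using R TM by blast
      then show "\<bar>p$i\<bar> \<le> R" using component_le_norm_cart[of p i] by linarith
    qed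
  qed
  then show ?thesis unfolding tri(2) emb_def by blast
qed

end
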